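(* Let $\mathbf K$ be an infinite field. Every automorphism $\Phi$ of $(Ass\text{-}\mathbf K)^0$ can be written as $$\Phi=\Upsilon\circ\hat\varphi\circ\Psi,$$ where $\Psi$ is an inner automorphism, $\hat\varphi$ is the standard $\varphi$-automorphism for some automorphism $\varphi$ of the field $\mathbf K$, and $\Upsilon$ is either the mirror automorphism or the identity automorphism.
   Context: A $\mathbf K$-algebra is an associative unital ring $A$ with a unital ring homomorphism $\mathbf K\to Z(A)$; homomorphisms are unital ring homomorphisms compatible with these maps. $(Ass\text{-}\mathbf K)^0$ is the category of free associative $\mathbf K$-algebras $\mathbf K\langle X\rangle$ on finite subsets $X$ of a fixed infinite set $X_0$, with all homomorphisms. Inner automorphism: an automorphism $\Psi$ is inner if there are $\mathbf K$-algebra isomorphisms $\sigma_A:A\to\Psi(A)$ with $\Psi(\nu)=\sigma_B\circ\nu\circ\sigma_A^{-1}$ for every morphism $\nu:A\to B$. Standard $\varphi$-automorphism: for an automorphism $\varphi$ of $\mathbf K$ and a free algebra $C=\mathbf K\langle X_C\rangle$, let $\varphi_C:C\to C$ be $\sum_w a_w w\mapsto\sum_w\varphi(a_w)w$, where $w$ ranges over monomials in $X_C$. The standard $\varphi$-automorphism $\hat\varphi$ fixes all objects and sends $\nu:A\to B$ to $\varphi_B\circ\nu\circ\varphi_A^{-1}$. Mirror automorphism $\Upsilon$: for each $A$, let $\eta_A$ be the $\mathbf K$-linear anti-automorphism reversing every monomial. Then $\Upsilon(A)=A$ and $\Upsilon(\nu)=\eta_B\circ\nu\circ\eta_A^{-1}$.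 *)

theory Defs
  imports Main
begin

text \<open>Elements of the free associative algebra K<X> are represented as
finitely supported coefficient functions on words (monomials = lists over X).\<close>

type_synonym ('x, 'k) fpoly = "'x list \<Rightarrow> 'k"

definition fpolys :: "'x set \<Rightarrow> ('x, 'k::field) fpoly set" where
  "fpolys X = {p. finite {w. p w \<noteq> 0} \<and> (\<forall>w. p w \<noteq> 0 \<longrightarrow> set w \<subseteq> X)}"

definition fp_add :: "('x, 'k::field) fpoly \<Rightarrow> ('x, 'k) fpoly \<Rightarrow> ('x, 'k) fpoly" where
  "fp_add p q = (\<lambda>w. p w + q w)"

definition fp_smult :: "'k::field \<Rightarrow> ('x, 'k) fpoly \<Rightarrow> ('x, 'k) fpoly" where
  "fp_smult c p = (\<lambda>w. c * p w)"

definition fp_mult :: "('x, 'k::field) fpoly \<Rightarrow> ('x, 'k) fpoly \<Rightarrow> ('x, 'k) fpoly" where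
  "fp_mult p q = (\<lambda>w. \<Sum>i\<in>{0..length w}. p (take i w) * q (drop i w))"

definition fp_one :: "('x, 'k::field) fpoly" where
  "fp_one = (\<lambda>w. if w = [] then 1 else 0)"

definition alg_hom :: "'x set \<Rightarrow> 'x set \<Rightarrow> (('x, 'k::field) fpoly \<Rightarrow> ('x, 'k) fpoly) \<Rightarrow> bool" where
  "alg_hom X Y f \<longleftrightarrow>
     (\<forall>p\<in>fpolys X. f p \<in> fpolys Y) \<and>
     (\<forall>p\<in>fpolys X. \<forall>q\<in>fpolys X. f (fp_add p q) = fp_add (f p) (f q)) \<and>
     (\<forall>p\<in>fpolys X. \<forall>q\<in>fpolys X. f (fp_mult p q) = fp_mult (f p) (f q)) \<and>
     (\<forall>c. \<forall>p\<in>fpolys X. f (fp_smult c p) = fp_smult c (f p)) \<and>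
     f fp_one = fp_one \<and>
     (\<forall>p. p \<notin> fpolys X \<longrightarrow> f p = undefined)"

text \<open>Objects: finite subsets X of the infinite set UNIV :: 'x set (X0).
Morphisms: triples (domain, codomain, homomorphism).\<close>
type_synonym ('x, 'k) mor = "'x set \<times> 'x set \<times> (('x, 'k) fpoly \<Rightarrow> ('x, 'k) fpoly)"

definition Obj :: "'x set set" where
  "Obj = {X. finite X}"

definition Mor :: "('x, 'k::field) mor set" where
  "Mor = {(X, Y, f). finite X \<and> finite Y \<and> alg_hom X Y f}"

definition mdom :: "('x, 'k) mor \<Rightarrow> 'x set" where "mdom m = fst m"
definition mcod :: "('x, 'k) mor \<Rightarrow> 'x set" where "mcod m = fst (snd m)"
definition mfun :: "('x, 'k) mor \<Rightarrow> ('x, 'k) fpoly \<Rightarrow> ('x, 'k) fpoly" where "mfun m = snd (snd m)"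

definition restr :: "'x set \<Rightarrow> (('x, 'k::field) fpoly \<Rightarrow> ('x, 'k) fpoly) \<Rightarrow> ('x, 'k) fpoly \<Rightarrow> ('x, 'k) fpoly" where
  "restr X f = (\<lambda>p. if p \<in> fpolys X then f p else undefined)"

definition mcomp :: "('x, 'k::field) mor \<Rightarrow> ('x, 'k) mor \<Rightarrow> ('x, 'k) mor" where
  "mcomp g f = (mdom f, mcod g, restr (mdom f) (mfun g \<circ> mfun f))"

definition mid :: "'x set \<Rightarrow> ('x, 'k::field) mor" where
  "mid X = (X, X, restr X id)"

definition cat_aut :: "('x set \<Rightarrow> 'x set) \<Rightarrow> (('x, 'k::field) mor \<Rightarrow> ('x, 'k) mor) \<Rightarrow> bool" where
  "cat_aut FO FM \<longleftrightarrow>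
     bij_betw FO Obj Obj \<and> bij_betw FM Mor Mor \<and>
     (\<forall>m\<in>Mor. mdom (FM m) = FO (mdom m) \<and> mcod (FM m) = FO (mcod m)) \<and>
     (\<forall>f\<in>Mor. \<forall>g\<in>Mor. mcod f = mdom g \<longrightarrow> FM (mcomp g f) = mcomp (FM g) (FM f)) \<and>
     (\<forall>X\<in>Obj. FM (mid X) = mid (FO X))"

definition inner_aut :: "('x set \<Rightarrow> 'x set) \<Rightarrow> (('x, 'k::field) mor \<Rightarrow> ('x, 'k) mor) \<Rightarrow> bool" where
  "inner_aut FO FM \<longleftrightarrow>
     (\<exists>\<sigma> :: 'x set \<Rightarrow> ('x, 'k) fpoly \<Rightarrow> ('x, 'k) fpoly.
        (\<forall>X\<in>Obj. alg_hom X (FO X) (\<sigma> X) \<and> bij_betw (\<sigma> X) (fpolys X) (fpolys (FO X))) \<and>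
        (\<forall>m\<in>Mor. FM m = (FO (mdom m), FO (mcod m),
            restr (FO (mdom m))
              (\<sigma> (mcod m) \<circ> mfun m \<circ> inv_into (fpolys (mdom m)) (\<sigma> (mdom m))))))"

definition field_aut :: "('k::field \<Rightarrow> 'k) \<Rightarrow> bool" where
  "field_aut \<phi> \<longleftrightarrow> bij \<phi> \<and> (\<forall>a b. \<phi> (a + b) = \<phi> a + \<phi> b) \<and>
     (\<forall>a b. \<phi> (a * b) = \<phi> a * \<phi> b) \<and> \<phi> 1 = 1"

definition coeff_map :: "('k::field \<Rightarrow> 'k) \<Rightarrow> ('x, 'k) fpoly \<Rightarrow> ('x, 'k) fpoly" where
  "coeff_map \<phi> p = \<phi> \<circ> p"

text \<open>Standard phi-automorphism (on morphisms; it fixes all objects).\<close>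
definition std_aut :: "('k::field \<Rightarrow> 'k) \<Rightarrow> ('x, 'k) mor \<Rightarrow> ('x, 'k) mor" where
  "std_aut \<phi> m = (mdom m, mcod m,
     restr (mdom m) (coeff_map \<phi> \<circ> mfun m \<circ> coeff_map (inv \<phi>)))"

definition mirror_map :: "('x, 'k::field) fpoly \<Rightarrow> ('x, 'k) fpoly" where
  "mirror_map p = p \<circ> rev"

text \<open>Mirror automorphism (on morphisms; it fixes all objects); eta is an involution.\<close>
definition mirror_aut :: "('x, 'k::field) mor \<Rightarrow> ('x, 'k) mor" where
  "mirror_aut m = (mdom m, mcod m,
     restr (mdom m) (mirror_map \<circ> mfun m \<circ> inv_into (fpolys (mdom m)) mirror_map))"

end

theory Submission
  imports Defs "HOL-Library.Function_Algebras" "HOL-Computational_Algebra.Polynomial"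
begin

section \<open>Basic algebra of coefficient functions\<close>

declare plus_fun_apply[simp del] zero_fun_apply[simp del] times_fun_apply[simp del] one_fun_apply[simp del]
lemmas fun_ops = plus_fun_apply zero_fun_apply

definition mon :: "'x list \<Rightarrow> ('x, 'k::field) fpoly" where
  "mon u = (\<lambda>w. if w = u then 1 else 0)"

definition cst :: "'k::field \<Rightarrow> ('x, 'k) fpoly" where
  "cst c = (\<lambda>w. if w = [] then c else 0)"

definition fsupp :: "('x, 'k::field) fpoly \<Rightarrow> 'x list set" where
  "fsupp p = {w. p w \<noteq> 0}"

definition splits :: "'x list \<Rightarrow> ('x list \<times> 'x list) set" where
  "splits w = {(u, v). u @ v = w}"

lemma fp_add_eq: "fp_add p q = p + q"
  by (simp add: fp_add_def plus_fun_def)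

lemma fp_smult_apply: "fp_smult c p w = c * p w"
  by (simp add: fp_smult_def)

lemma fp_add_apply: "fp_add p q w = p w + q w"
  by (simp add: fp_add_def)

lemma sum_fun_apply: "(\<Sum>i\<in>A. f i) w = (\<Sum>i\<in>A. f i w)"
  by (induction A rule: infinite_finite_induct) (auto simp: fun_ops)

lemma splits_image: "splits w = (\<lambda>i. (take i w, drop i w)) ` {0..length w}"
proof
  show "splits w \<subseteq> (\<lambda>i. (take i w, drop i w)) ` {0..length w}"
  proof
    fix z assume "z \<in> splits w"
    then obtain u v where z: "z = (u, v)" "u @ v = w" by (auto simp: splits_def)
    then show "z \<in> (\<lambda>i. (take i w, drop i w)) ` {0..length w}"
      by (intro image_eqI[where x="length u"]) auto
  qed
qed (auto simp: splits_def)

lemma finite_splits[simp]: "finite (splits w)"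
  by (simp add: splits_image)

lemma fp_mult_splits: "fp_mult p q w = (\<Sum>(u, v)\<in>splits w. p u * q v)"
proof -
  have inj: "inj_on (\<lambda>i. (take i w, drop i w)) {0..length w}"
    by (rule inj_onI) (metis (no_types, lifting) Pair_inject append_eq_conv_conj atLeastAtMost_iff length_take min.absorb2)
  show ?thesis
    unfolding fp_mult_def splits_image
    by (subst sum.reindex[OF inj]) (simp add: o_def)
qed

definition splits3 :: "'x list \<Rightarrow> ('x list \<times> 'x list \<times> 'x list) set" where
  "splits3 w = {(a, b, c). a @ b @ c = w}"

lemma sum_splits_left:
  "(\<Sum>(m, c)\<in>splits w. \<Sum>(a, b)\<in>splits m. f a b c) = (\<Sum>(a, b, c)\<in>splits3 w. f a b c)"
proof -
  have "(\<Sum>(m, c)\<in>splits w. \<Sum>(a, b)\<in>splits m. f a b c)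
      = (\<Sum>((m, c), (a, b))\<in>(SIGMA z:splits w. splits (fst z)). f a b c)"
    by (subst sum.Sigma[symmetric]) (auto simp: case_prod_beta intro!: sum.cong)
  also have "\<dots> = (\<Sum>(a, b, c)\<in>splits3 w. f a b c)"
    by (rule sum.reindex_bij_witness[where i="\<lambda>(a,b,c). ((a@b, c), (a, b))" and j="\<lambda>((m,c),(a,b)). (a,b,c)"])
       (auto simp: splits_def splits3_def)
  finally show ?thesis .
qed

lemma sum_splits_right:
  "(\<Sum>(a, m)\<in>splits w. \<Sum>(b, c)\<in>splits m. f a b c) = (\<Sum>(a, b, c)\<in>splits3 w. f a b c)"
proof -
  have "(\<Sum>(a, m)\<in>splits w. \<Sum>(b, c)\<in>splits m. f a b c)
      = (\<Sum>((a, m), (b, c))\<in>(SIGMA z:splits w. splits (snd z)). f a b c)"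
    by (subst sum.Sigma[symmetric]) (auto simp: case_prod_beta intro!: sum.cong)
  also have "\<dots> = (\<Sum>(a, b, c)\<in>splits3 w. f a b c)"
    by (rule sum.reindex_bij_witness[where i="\<lambda>(a,b,c). ((a, b@c), (b, c))" and j="\<lambda>((a,m),(b,c)). (a,b,c)"])
       (auto simp: splits_def splits3_def)
  finally show ?thesis .
qed

lemma fp_mult_assoc: "fp_mult (fp_mult p q) r = fp_mult p (fp_mult q r)"
proof
  fix w
  have "fp_mult (fp_mult p q) r w = (\<Sum>(m, c)\<in>splits w. \<Sum>(a, b)\<in>splits m. p a * q b * r c)"
    by (simp add: fp_mult_splits case_prod_beta sum_distrib_right)
  also have "\<dots> = (\<Sum>(a, b, c)\<in>splits3 w. p a * q b * r c)"
    by (rule sum_splits_left)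
  also have "\<dots> = (\<Sum>(a, m)\<in>splits w. \<Sum>(b, c)\<in>splits m. p a * q b * r c)"
    by (rule sum_splits_right[symmetric])
  also have "\<dots> = fp_mult p (fp_mult q r) w"
    by (simp add: fp_mult_splits case_prod_beta sum_distrib_left mult.assoc)
  finally show "fp_mult (fp_mult p q) r w = fp_mult p (fp_mult q r) w" .
qed

lemma fp_mult_add_left: "fp_mult (p + q) r = fp_mult p r + fp_mult q r"
  by (auto simp: fun_eq_iff fun_ops fp_mult_def distrib_right sum.distrib)

lemma fp_mult_add_right: "fp_mult r (p + q) = fp_mult r p + fp_mult r q"
  by (auto simp: fun_eq_iff fun_ops fp_mult_def distrib_left sum.distrib)

lemma fp_mult_smult_left: "fp_mult (fp_smult c p) q = fp_smult c (fp_mult p q)"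
  by (auto simp: fun_eq_iff fun_ops fp_mult_def sum_distrib_left mult.assoc fp_smult_def)

lemma fp_mult_smult_right: "fp_mult p (fp_smult c q) = fp_smult c (fp_mult p q)"
  by (auto simp: fun_eq_iff fun_ops fp_mult_def sum_distrib_left mult.assoc mult.left_commute fp_smult_def)

lemma fp_mult_zero_left[simp]: "fp_mult 0 q = 0"
  by (auto simp: fun_eq_iff fun_ops fp_mult_def)

lemma fp_mult_zero_right[simp]: "fp_mult q 0 = 0"
  by (auto simp: fun_eq_iff fun_ops fp_mult_def)

lemma fp_smult_zero[simp]: "fp_smult c 0 = 0"
  by (auto simp: fun_eq_iff fun_ops fp_smult_def)

lemma fp_smult_zero_left[simp]: "fp_smult 0 p = 0"
  by (auto simp: fun_eq_iff fun_ops fp_smult_def)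

lemma fp_smult_one[simp]: "fp_smult 1 p = p"
  by (auto simp: fun_eq_iff fun_ops fp_smult_def)

lemma fp_smult_smult[simp]: "fp_smult a (fp_smult b p) = fp_smult (a * b) p"
  by (auto simp: fun_eq_iff fun_ops fp_smult_def)

lemma fp_smult_add: "fp_smult c (p + q) = fp_smult c p + fp_smult c q"
  by (auto simp: fun_eq_iff fun_ops fp_smult_def distrib_left)

lemma fp_smult_add_left: "fp_smult (a + b) p = fp_smult a p + fp_smult b p"
  by (auto simp: fun_eq_iff fun_ops fp_smult_def distrib_right)


lemma fp_smult_sum: "fp_smult c (\<Sum>i\<in>A. f i) = (\<Sum>i\<in>A. fp_smult c (f i))"
  by (induction A rule: infinite_finite_induct) (simp_all add: fp_smult_add)

lemma fp_mult_sum_left: "fp_mult (\<Sum>i\<in>A. f i) q = (\<Sum>i\<in>A. fp_mult (f i) q)"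
  by (induction A rule: infinite_finite_induct) (simp_all add: fp_mult_add_left)

lemma fp_mult_sum_right: "fp_mult q (\<Sum>i\<in>A. f i) = (\<Sum>i\<in>A. fp_mult q (f i))"
  by (induction A rule: infinite_finite_induct) (simp_all add: fp_mult_add_right)

lemma mon_apply: "mon u w = (if w = u then 1 else 0)"
  by (simp add: mon_def)

lemma sum_splits_delta:
  assumes "z0 \<in> splits w"
  shows "(\<Sum>z\<in>splits w. if z = z0 then f z else 0) = f z0"
  using assms by (simp add: sum.delta)

lemma fp_mult_mon: "fp_mult (mon u) (mon v) = mon (u @ v)"
proof
  fix w
  have "fp_mult (mon u) (mon v) w = (\<Sum>z\<in>splits w. if z = (u, v) then 1 else 0)"
    unfolding fp_mult_splits by (rule sum.cong) (auto simp: mon_def split: if_splits)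
  also have "\<dots> = mon (u @ v) w"
    by (subst sum.delta[OF finite_splits]) (auto simp: splits_def mon_def)
  finally show "fp_mult (mon u) (mon v) w = mon (u @ v) w" .
qed

lemma fp_one_mon: "fp_one = mon []"
  by (auto simp: fp_one_def mon_def)

lemma cst_eq: "cst c = fp_smult c fp_one"
  by (auto simp: cst_def fp_one_def fp_smult_def)

lemma fp_mult_one_left[simp]: "fp_mult fp_one p = p"
proof
  fix w
  have "fp_mult fp_one p w = (\<Sum>z\<in>splits w. if z = ([], w) then p (snd z) else 0)"
    unfolding fp_mult_splits by (rule sum.cong) (auto simp: fp_one_def splits_def split: if_splits)
  also have "\<dots> = p w"
    by (subst sum_splits_delta) (auto simp: splits_def)
  finally show "fp_mult fp_one p w = p w" .
qed

lemma fp_mult_one_right[simp]: "fp_mult p fp_one = p"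
proof
  fix w
  have "fp_mult p fp_one w = (\<Sum>z\<in>splits w. if z = (w, []) then p (fst z) else 0)"
    unfolding fp_mult_splits by (rule sum.cong) (auto simp: fp_one_def splits_def split: if_splits)
  also have "\<dots> = p w"
    by (subst sum_splits_delta) (auto simp: splits_def)
  finally show "fp_mult p fp_one w = p w" .
qed

lemma fp_mult_cst_left: "fp_mult (cst c) p = fp_smult c p"
  by (simp add: cst_eq fp_mult_smult_left)

lemma fp_mult_cst_right: "fp_mult p (cst c) = fp_smult c p"
  by (simp add: cst_eq fp_mult_smult_right)

lemma cst_mult: "fp_mult (cst a) (cst b) = cst (a * b)"
  unfolding fp_mult_cst_left by (auto simp: cst_def fun_eq_iff fp_smult_def)

lemma cst_add: "cst a + cst b = cst (a + b)"
  by (auto simp: cst_def fun_eq_iff fun_ops)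

lemma cst_zero[simp]: "cst 0 = 0"
  by (auto simp: cst_def fun_eq_iff fun_ops)

lemma cst_one: "cst 1 = fp_one"
  by (auto simp: cst_def fp_one_def fp_smult_def)

lemma cst_sum: "(\<Sum>i\<in>A. cst (f i)) = cst (\<Sum>i\<in>A. f i)"
  by (induction A rule: infinite_finite_induct) (simp_all add: cst_add)

lemma cst_inj: "cst a = cst b \<Longrightarrow> a = b"
  by (metis cst_def)

lemma smult_cst: "fp_smult a (cst b) = cst (a * b)"
  by (auto simp: cst_def fun_eq_iff fp_smult_def)

lemma sum_smult_mon_apply:
  assumes "finite S"
  shows "(\<Sum>w\<in>S. fp_smult (f w) (mon w)) v = (if v \<in> S then f v else 0)"
proof -
  have "(\<Sum>w\<in>S. fp_smult (f w) (mon w)) v = (\<Sum>w\<in>S. if w = v then f w else 0)"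
    unfolding sum_fun_apply by (rule sum.cong) (auto simp: fp_smult_apply mon_apply)
  also have "\<dots> = (if v \<in> S then f v else 0)" by (rule sum.delta[OF assms])
  finally show ?thesis .
qed

lemma decomp_superset:
  assumes "finite S" "fsupp p \<subseteq> S"
  shows "p = (\<Sum>w\<in>S. fp_smult (p w) (mon w))"
proof
  fix v show "p v = (\<Sum>w\<in>S. fp_smult (p w) (mon w)) v"
    using assms by (subst sum_smult_mon_apply) (auto simp: fsupp_def)
qed

lemma decomp:
  assumes "finite (fsupp p)"
  shows "p = (\<Sum>w\<in>fsupp p. fp_smult (p w) (mon w))"
  using decomp_superset[OF assms subset_refl] .

lemma fpolys_iff: "p \<in> fpolys X \<longleftrightarrow> finite (fsupp p) \<and> (\<forall>w\<in>fsupp p. set w \<subseteq> X)"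
  by (auto simp: fpolys_def fsupp_def)

lemma fpolys_finite: "p \<in> fpolys X \<Longrightarrow> finite (fsupp p)"
  by (simp add: fpolys_iff)

lemma fpolys_set: "p \<in> fpolys X \<Longrightarrow> p w \<noteq> 0 \<Longrightarrow> set w \<subseteq> X"
  by (simp add: fpolys_def)

lemma fpolys_zero[simp]: "0 \<in> fpolys X"
  by (simp add: fpolys_def fun_ops)

lemma fsupp_add: "fsupp (p + q) \<subseteq> fsupp p \<union> fsupp q"
  by (auto simp: fsupp_def fun_ops)

lemma fpolys_add[simp]:
  assumes p: "p \<in> fpolys X" and q: "q \<in> fpolys X"
  shows "p + q \<in> fpolys X"
proof -
  have s: "fsupp (p + q) \<subseteq> fsupp p \<union> fsupp q" by (rule fsupp_add)
  have "finite (fsupp p \<union> fsupp q)" using p q by (simp add: fpolys_iff)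
  then have "finite (fsupp (p + q))" using s by (rule finite_subset[rotated])
  moreover have "\<forall>w\<in>fsupp (p + q). set w \<subseteq> X"
  proof
    fix w assume "w \<in> fsupp (p + q)"
    then have "w \<in> fsupp p \<or> w \<in> fsupp q" using s by blast
    then show "set w \<subseteq> X" using p q by (auto simp: fpolys_iff)
  qed
  ultimately show ?thesis by (simp add: fpolys_iff)
qed

lemma fpolys_fp_add[simp]: "p \<in> fpolys X \<Longrightarrow> q \<in> fpolys X \<Longrightarrow> fp_add p q \<in> fpolys X"
  by (simp add: fp_add_eq)

lemma fpolys_smult[simp]:
  assumes p: "p \<in> fpolys X"
  shows "fp_smult c p \<in> fpolys X"
proof -
  have s: "fsupp (fp_smult c p) \<subseteq> fsupp p" by (auto simp: fsupp_def fp_smult_def)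
  have "finite (fsupp (fp_smult c p))" using p s by (simp add: fpolys_iff finite_subset)
  moreover have "\<forall>w\<in>fsupp (fp_smult c p). set w \<subseteq> X" using p s by (auto simp: fpolys_iff)
  ultimately show ?thesis by (simp add: fpolys_iff)
qed

lemma fpolys_sum[simp]: "(\<And>i. i \<in> A \<Longrightarrow> f i \<in> fpolys X) \<Longrightarrow> (\<Sum>i\<in>A. f i) \<in> fpolys X"
  by (induction A rule: infinite_finite_induct) auto

lemma fpolys_mon[simp]:
  assumes "set w \<subseteq> X"
  shows "mon w \<in> fpolys X"
proof -
  have s: "fsupp (mon w) \<subseteq> {w}" by (auto simp: fsupp_def mon_def)
  have "finite (fsupp (mon w))" by (rule finite_subset[OF s]) simp
  moreover have "\<forall>v\<in>fsupp (mon w). set v \<subseteq> X" using assms s by auto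
  ultimately show ?thesis by (simp add: fpolys_iff)
qed

lemma fpolys_cst[simp]: "cst c \<in> fpolys X"
proof -
  have s: "fsupp (cst c) \<subseteq> {[]}" by (auto simp: fsupp_def cst_def)
  have "finite (fsupp (cst c))" by (rule finite_subset[OF s]) simp
  moreover have "\<forall>v\<in>fsupp (cst c). set v \<subseteq> X" using s by auto
  ultimately show ?thesis by (simp add: fpolys_iff)
qed

lemma fpolys_one[simp]: "fp_one \<in> fpolys X"
  by (metis cst_one fpolys_cst)

lemma fpolys_neg[simp]: "p \<in> fpolys X \<Longrightarrow> - p \<in> fpolys X"
proof -
  assume "p \<in> fpolys X"
  moreover have "- p = fp_smult (-1) p" by (auto simp: fp_smult_def fun_eq_iff)
  ultimately show ?thesis by simp
qed

lemma fpolys_diff[simp]: "p \<in> fpolys X \<Longrightarrow> q \<in> fpolys X \<Longrightarrow> p - q \<in> fpolys X"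
proof -
  assume "p \<in> fpolys X" "q \<in> fpolys X"
  then have "p + (- q) \<in> fpolys X" by (intro fpolys_add fpolys_neg)
  then show ?thesis by (simp only: diff_conv_add_uminus)
qed

lemma fpolys_mono: "X \<subseteq> Y \<Longrightarrow> p \<in> fpolys X \<Longrightarrow> p \<in> fpolys Y"
  by (auto simp: fpolys_def)

lemma fp_mult_nonzero:
  assumes "fp_mult p q w \<noteq> 0"
  shows "\<exists>u v. u @ v = w \<and> p u \<noteq> 0 \<and> q v \<noteq> 0"
proof (rule ccontr)
  assume "\<not> ?thesis"
  then have "\<forall>(u, v)\<in>splits w. p u * q v = 0" by (auto simp: splits_def)
  then have "fp_mult p q w = 0" unfolding fp_mult_splits by (intro sum.neutral) auto
  with assms show False by simp
qed

lemma fpolys_mult[simp]: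
  assumes p: "p \<in> fpolys X" and q: "q \<in> fpolys X"
  shows "fp_mult p q \<in> fpolys X"
proof -
  have s: "fsupp (fp_mult p q) \<subseteq> (\<lambda>(u, v). u @ v) ` (fsupp p \<times> fsupp q)"
  proof
    fix w assume "w \<in> fsupp (fp_mult p q)"
    then obtain u v where "u @ v = w" "p u \<noteq> 0" "q v \<noteq> 0"
      using fp_mult_nonzero[of p q w] by (auto simp: fsupp_def)
    then show "w \<in> (\<lambda>(u, v). u @ v) ` (fsupp p \<times> fsupp q)"
      by (auto simp: fsupp_def)
  qed
  have "finite ((\<lambda>(u, v). u @ v) ` (fsupp p \<times> fsupp q))"
    using p q by (simp add: fpolys_iff)
  then have "finite (fsupp (fp_mult p q))" by (rule finite_subset[OF s])
  moreover have "\<forall>w\<in>fsupp (fp_mult p q). set w \<subseteq> X"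
  proof
    fix w assume "w \<in> fsupp (fp_mult p q)"
    then obtain u v where "u @ v = w" "p u \<noteq> 0" "q v \<noteq> 0"
      using fp_mult_nonzero[of p q w] by (auto simp: fsupp_def)
    then show "set w \<subseteq> X" using fpolys_set[OF p, of u] fpolys_set[OF q, of v] by auto
  qed
  ultimately show ?thesis by (simp add: fpolys_iff)
qed

lemma fpolys_empty:
  assumes "p \<in> fpolys {}"
  shows "p = cst (p [])"
proof
  fix w
  have "p w \<noteq> 0 \<Longrightarrow> w = []" using assms by (auto simp: fpolys_def)
  then show "p w = cst (p []) w" by (cases "w = []") (auto simp: cst_def)
qed


section \<open>Substitution homomorphisms\<close>

fun gprod :: "('y \<Rightarrow> ('x, 'k::field) fpoly) \<Rightarrow> 'y list \<Rightarrow> ('x, 'k) fpoly" where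
  "gprod g [] = fp_one"
| "gprod g (x # w) = fp_mult (g x) (gprod g w)"

definition fext :: "('y \<Rightarrow> ('x, 'k::field) fpoly) \<Rightarrow> ('y, 'k) fpoly \<Rightarrow> ('x, 'k) fpoly" where
  "fext g p = (\<Sum>w\<in>fsupp p. fp_smult (p w) (gprod g w))"

definition homof :: "('x \<Rightarrow> ('x, 'k::field) fpoly) \<Rightarrow> 'x set \<Rightarrow> ('x, 'k) fpoly \<Rightarrow> ('x, 'k) fpoly" where
  "homof g X = restr X (fext g)"

lemma gprod_append: "gprod g (u @ v) = fp_mult (gprod g u) (gprod g v)"
  by (induction u) (simp_all add: fp_mult_assoc)

lemma gprod_mem: "(\<And>x. x \<in> set w \<Longrightarrow> g x \<in> fpolys Y) \<Longrightarrow> gprod g w \<in> fpolys Y"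
  by (induction w) auto

lemma fext_superset:
  assumes "finite S" "fsupp p \<subseteq> S"
  shows "fext g p = (\<Sum>w\<in>S. fp_smult (p w) (gprod g w))"
  unfolding fext_def
  by (rule sum.mono_neutral_left) (use assms in \<open>auto simp: fsupp_def\<close>)

lemma fsupp_smult: "fsupp (fp_smult c p) \<subseteq> fsupp p"
  by (auto simp: fsupp_def fp_smult_def)

lemma fext_add:
  assumes "finite (fsupp p)" "finite (fsupp q)"
  shows "fext g (p + q) = fext g p + fext g q"
proof -
  let ?S = "fsupp p \<union> fsupp q"
  have f: "finite ?S" using assms by simp
  have "fext g (p + q) = (\<Sum>w\<in>?S. fp_smult ((p + q) w) (gprod g w))"
    by (rule fext_superset[OF f fsupp_add])
  also have "\<dots> = (\<Sum>w\<in>?S. fp_smult (p w) (gprod g w)) + (\<Sum>w\<in>?S. fp_smult (q w) (gprod g w))"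
    by (simp add: fun_ops fp_smult_add_left sum.distrib)
  also have "\<dots> = fext g p + fext g q"
    by (simp add: fext_superset[OF f])
  finally show ?thesis .
qed

lemma fext_smult:
  assumes "finite (fsupp p)"
  shows "fext g (fp_smult c p) = fp_smult c (fext g p)"
proof -
  have "fext g (fp_smult c p) = (\<Sum>w\<in>fsupp p. fp_smult (c * p w) (gprod g w))"
    by (subst fext_superset[OF assms fsupp_smult]) (simp add: fp_smult_def)
  also have "\<dots> = fp_smult c (fext g p)"
    by (simp add: fext_def fp_smult_sum)
  finally show ?thesis .
qed

lemma fext_zero[simp]: "fext g 0 = 0"
  by (simp add: fext_def fsupp_def fun_ops)

lemma finite_fsupp_sum:
  "(\<And>i. i \<in> A \<Longrightarrow> finite (fsupp (f i))) \<Longrightarrow> finite (fsupp (\<Sum>i\<in>A. f i))"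
proof (induction A rule: infinite_finite_induct)
  case (insert x F)
  have "fsupp (\<Sum>i\<in>insert x F. f i) \<subseteq> fsupp (f x) \<union> fsupp (\<Sum>i\<in>F. f i)"
    using insert.hyps by (simp add: fsupp_add)
  then show ?case using insert by (meson finite_UnI finite_subset insertCI)
qed (auto simp: fsupp_def fun_ops)

lemma fext_sum:
  "(\<And>i. i \<in> A \<Longrightarrow> finite (fsupp (f i))) \<Longrightarrow> fext g (\<Sum>i\<in>A. f i) = (\<Sum>i\<in>A. fext g (f i))"
proof (induction A rule: infinite_finite_induct)
  case (insert x F)
  then show ?case by (simp add: fext_add finite_fsupp_sum)
qed auto

lemma finite_fsupp_mon[simp]: "finite (fsupp (mon w))"
proof -
  have "fsupp (mon w) \<subseteq> {w}" by (auto simp: fsupp_def mon_def)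
  then show ?thesis by (rule finite_subset) simp
qed

lemma finite_fsupp_smult_mon[simp]: "finite (fsupp (fp_smult c (mon w)))"
  by (rule finite_subset[OF fsupp_smult]) simp

lemma fext_mon: "fext g (mon w) = gprod g w"
proof -
  have "fext g (mon w) = (\<Sum>v\<in>{w}. fp_smult (mon w v) (gprod g v))"
    by (rule fext_superset) (auto simp: fsupp_def mon_def)
  then show ?thesis by (simp add: mon_def)
qed

lemma mult_expand:
  assumes "finite (fsupp p)" "finite (fsupp q)"
  shows "fp_mult p q = (\<Sum>u\<in>fsupp p. \<Sum>v\<in>fsupp q. fp_smult (p u * q v) (mon (u @ v)))"
proof -
  have e1: "(\<Sum>u\<in>fsupp p. fp_smult (p u) (mon u)) = p" by (rule decomp[OF assms(1), symmetric])
  have e2: "(\<Sum>v\<in>fsupp q. fp_smult (q v) (mon v)) = q" by (rule decomp[OF assms(2), symmetric])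
  have "fp_mult (\<Sum>u\<in>fsupp p. fp_smult (p u) (mon u)) (\<Sum>v\<in>fsupp q. fp_smult (q v) (mon v))
      = (\<Sum>u\<in>fsupp p. \<Sum>v\<in>fsupp q. fp_smult (p u * q v) (mon (u @ v)))"
    apply (simp only: fp_mult_sum_left)
    apply (simp only: fp_mult_sum_right)
    apply (simp add: fp_mult_smult_left fp_mult_smult_right fp_mult_mon mult.commute)
    done
  then show ?thesis by (simp only: e1 e2)
qed

lemma fext_mult:
  assumes "finite (fsupp p)" "finite (fsupp q)"
  shows "fext g (fp_mult p q) = fp_mult (fext g p) (fext g q)"
proof -
  have "fext g (fp_mult p q) = (\<Sum>u\<in>fsupp p. \<Sum>v\<in>fsupp q. fp_smult (p u * q v) (gprod g (u @ v)))"
    by (simp add: mult_expand[OF assms] fext_sum finite_fsupp_sum fext_smult fext_mon)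
  also have "\<dots> = fp_mult (fext g p) (fext g q)"
    unfolding fext_def
    apply (simp only: fp_mult_sum_left)
    apply (simp only: fp_mult_sum_right)
    apply (simp add: fp_mult_smult_left fp_mult_smult_right gprod_append mult.commute)
    done
  finally show ?thesis .
qed

lemma fext_one[simp]: "fext g fp_one = fp_one"
  by (simp add: fp_one_mon fext_mon)

lemma finite_fsupp_cst[simp]: "finite (fsupp (cst c))"
  by (simp add: fpolys_finite[OF fpolys_cst])

lemma finite_fsupp_one[simp]: "finite (fsupp fp_one)"
  by (rule fpolys_finite[OF fpolys_one])

lemma fext_cst[simp]: "fext g (cst c) = cst c"
  by (simp add: cst_eq fext_smult)

lemma fext_mem:
  assumes "p \<in> fpolys X" "\<And>x. x \<in> X \<Longrightarrow> g x \<in> fpolys Y"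
  shows "fext g p \<in> fpolys Y"
  unfolding fext_def
  using assms by (intro fpolys_sum fpolys_smult gprod_mem) (auto simp: fsupp_def dest: fpolys_set)

lemma restr_in[simp]: "p \<in> fpolys X \<Longrightarrow> restr X f p = f p"
  by (simp add: restr_def)

lemma restr_out[simp]: "p \<notin> fpolys X \<Longrightarrow> restr X f p = undefined"
  by (simp add: restr_def)

lemma alg_hom_homof:
  assumes "\<And>x. x \<in> X \<Longrightarrow> g x \<in> fpolys Y"
  shows "alg_hom X Y (homof g X)"
  unfolding alg_hom_def homof_def
  using assms by (auto simp: fext_mem fext_add fext_mult fext_smult fpolys_finite fp_add_eq)

lemma homof_mon1: "x \<in> X \<Longrightarrow> homof g X (mon [x]) = g x"
  by (simp add: homof_def fext_mon)

lemma homof_cong: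
  assumes "\<And>x. x \<in> X \<Longrightarrow> g x = g' x"
  shows "homof g X = homof g' X"
proof
  fix p show "homof g X p = homof g' X p"
  proof (cases "p \<in> fpolys X")
    case True
    have "gprod g w = gprod g' w" if "w \<in> fsupp p" for w
    proof -
      have "set w \<subseteq> X" using that True by (auto simp: fsupp_def dest: fpolys_set)
      then show ?thesis using assms by (induction w) auto
    qed
    then show ?thesis using True by (simp add: homof_def fext_def)
  qed (simp add: homof_def)
qed

lemma alg_hom_in: "alg_hom X Y f \<Longrightarrow> p \<in> fpolys X \<Longrightarrow> f p \<in> fpolys Y"
  by (simp add: alg_hom_def)

lemma alg_hom_add: "alg_hom X Y f \<Longrightarrow> p \<in> fpolys X \<Longrightarrow> q \<in> fpolys X \<Longrightarrow> f (p + q) = f p + f q"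
  by (simp add: alg_hom_def fp_add_eq)

lemma alg_hom_mult: "alg_hom X Y f \<Longrightarrow> p \<in> fpolys X \<Longrightarrow> q \<in> fpolys X \<Longrightarrow> f (fp_mult p q) = fp_mult (f p) (f q)"
  by (simp add: alg_hom_def)

lemma alg_hom_smult: "alg_hom X Y f \<Longrightarrow> p \<in> fpolys X \<Longrightarrow> f (fp_smult c p) = fp_smult c (f p)"
  by (simp add: alg_hom_def)

lemma alg_hom_one: "alg_hom X Y f \<Longrightarrow> f fp_one = fp_one"
  by (simp add: alg_hom_def)

lemma alg_hom_out: "alg_hom X Y f \<Longrightarrow> p \<notin> fpolys X \<Longrightarrow> f p = undefined"
  by (simp add: alg_hom_def)

lemma alg_hom_cst: "alg_hom X Y f \<Longrightarrow> f (cst c) = cst c"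
  by (simp add: cst_eq alg_hom_smult alg_hom_one)

lemma alg_hom_zero: "alg_hom X Y f \<Longrightarrow> f 0 = 0"
  by (metis alg_hom_cst cst_zero)

lemma alg_hom_sum:
  "alg_hom X Y f \<Longrightarrow> (\<And>i. i \<in> A \<Longrightarrow> h i \<in> fpolys X) \<Longrightarrow> f (\<Sum>i\<in>A. h i) = (\<Sum>i\<in>A. f (h i))"
proof (induction A rule: infinite_finite_induct)
  case (insert x F)
  then show ?case by (simp add: alg_hom_add)
qed (auto simp: alg_hom_zero)

lemma alg_hom_mon:
  "alg_hom X Y f \<Longrightarrow> set w \<subseteq> X \<Longrightarrow> f (mon w) = gprod (\<lambda>x. f (mon [x])) w"
proof (induction w)
  case Nil
  then show ?case by (simp add: fp_one_mon[symmetric] alg_hom_one)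
next
  case (Cons x w)
  have e: "mon (x # w) = fp_mult (mon [x]) (mon w)" by (simp add: fp_mult_mon)
  have x: "x \<in> X" and w: "set w \<subseteq> X" using Cons.prems by auto
  have "f (mon (x # w)) = fp_mult (f (mon [x])) (f (mon w))"
    unfolding e using x w Cons.prems(1) by (simp add: alg_hom_mult)
  then show ?case using Cons.IH[OF Cons.prems(1) w] by simp
qed

lemma alg_hom_repr:
  assumes f: "alg_hom X Y f"
  shows "f = homof (\<lambda>x. f (mon [x])) X"
proof
  fix p show "f p = homof (\<lambda>x. f (mon [x])) X p"
  proof (cases "p \<in> fpolys X")
    case True
    have sw: "set w \<subseteq> X" if "w \<in> fsupp p" for w
      using that True by (auto simp: fsupp_def dest: fpolys_set)
    have "f p = f (\<Sum>w\<in>fsupp p. fp_smult (p w) (mon w))"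
      using decomp[OF fpolys_finite[OF True]] by simp
    also have "\<dots> = (\<Sum>w\<in>fsupp p. fp_smult (p w) (f (mon w)))"
      using sw by (simp add: alg_hom_sum[OF f] alg_hom_smult[OF f])
    also have "\<dots> = (\<Sum>w\<in>fsupp p. fp_smult (p w) (gprod (\<lambda>x. f (mon [x])) w))"
      using sw by (simp add: alg_hom_mon[OF f])
    finally show ?thesis using True by (simp add: homof_def fext_def)
  qed (simp add: homof_def alg_hom_out[OF f])
qed

lemma hom_eqI:
  assumes "alg_hom X Y f1" "alg_hom X Y f2" "\<And>x. x \<in> X \<Longrightarrow> f1 (mon [x]) = f2 (mon [x])"
  shows "f1 = f2"
  using alg_hom_repr[OF assms(1)] alg_hom_repr[OF assms(2)] homof_cong[of X "\<lambda>x. f1 (mon [x])" "\<lambda>x. f2 (mon [x])"] assms(3)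
  by metis

lemma alg_hom_comp:
  assumes "alg_hom X Y f" "alg_hom Y Z g"
  shows "alg_hom X Z (restr X (g \<circ> f))"
  using assms unfolding alg_hom_def by (auto simp: fpolys_one)

lemma alg_hom_id: "alg_hom X X (restr X id)"
  unfolding alg_hom_def by auto

lemma gprod_mon: "gprod (\<lambda>x. mon [x]) w = mon w"
  by (induction w) (simp_all add: fp_one_mon fp_mult_mon)

lemma fext_id: "finite (fsupp p) \<Longrightarrow> fext (\<lambda>x. mon [x]) p = p"
  by (simp add: fext_def gprod_mon decomp[symmetric])

definition ev :: "('x, 'k::field) fpoly \<Rightarrow> 'k \<Rightarrow> 'k" where
  "ev p a = (\<Sum>w\<in>fsupp p. p w * a ^ length w)"

lemma gprod_cst: "gprod (\<lambda>_. cst a) w = cst (a ^ length w)"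
  by (induction w) (simp_all add: cst_one cst_mult)

lemma fext_cst_ev: "fext (\<lambda>_. cst a) p = cst (ev p a)"
  by (simp add: fext_def ev_def gprod_cst smult_cst cst_sum)

lemma gprod_diag: "gprod (\<lambda>v. fp_smult (c v) (mon [v])) w = fp_smult (prod_list (map c w)) (mon w)"
  by (induction w) (simp_all add: fp_one_mon fp_mult_smult_left fp_mult_smult_right fp_mult_mon mult.commute)

lemma fext_diag:
  assumes "finite (fsupp p)"
  shows "fext (\<lambda>v. fp_smult (c v) (mon [v])) p = (\<lambda>w. prod_list (map c w) * p w)"
proof
  fix w
  have "fext (\<lambda>v. fp_smult (c v) (mon [v])) p w = (\<Sum>u\<in>fsupp p. fp_smult (p u * prod_list (map c u)) (mon u)) w"
    by (simp add: fext_def gprod_diag)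
  also have "\<dots> = (if w \<in> fsupp p then p w * prod_list (map c w) else 0)"
    by (rule sum_smult_mon_apply[OF assms])
  also have "\<dots> = prod_list (map c w) * p w"
    by (auto simp: fsupp_def)
  finally show "fext (\<lambda>v. fp_smult (c v) (mon [v])) p w = prod_list (map c w) * p w" .
qed


section \<open>Category automorphisms: basic facts\<close>

lemma Mor_iff: "(X, Y, f) \<in> Mor \<longleftrightarrow> finite X \<and> finite Y \<and> alg_hom X Y f"
  by (simp add: Mor_def)

lemma Obj_iff: "X \<in> Obj \<longleftrightarrow> finite X"
  by (simp add: Obj_def)

lemma mcomp_simp: "mcomp (Y, Z, g) (X, Y', f) = (X, Z, restr X (g \<circ> f))"
  by (simp add: mcomp_def mdom_def mcod_def mfun_def)

lemma hom_from_empty_unique: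
  assumes "alg_hom {} Y f1" "alg_hom {} Y f2"
  shows "f1 = f2"
  by (rule hom_eqI[OF assms]) simp

lemma replicate_of_set: "set u \<subseteq> {z} \<Longrightarrow> u = replicate (length u) z"
  by (metis replicate_length_same singletonD subsetD)

lemma comm_single:
  assumes p: "p \<in> fpolys {z}" and q: "q \<in> fpolys {z}"
  shows "fp_mult p q = fp_mult q p"
proof -
  have fp: "finite (fsupp p)" "finite (fsupp q)" using p q by (auto simp: fpolys_finite)
  have c: "u @ v = v @ u" if "u \<in> fsupp p" "v \<in> fsupp q" for u v
  proof -
    have "set u \<subseteq> {z}" "set v \<subseteq> {z}" using that p q by (auto simp: fsupp_def dest: fpolys_set)
    then have "u = replicate (length u) z" "v = replicate (length v) z" by (auto intro: replicate_of_set)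
    then show ?thesis by (metis replicate_add add.commute)
  qed
  have "fp_mult p q = (\<Sum>u\<in>fsupp p. \<Sum>v\<in>fsupp q. fp_smult (p u * q v) (mon (u @ v)))"
    by (rule mult_expand[OF fp])
  also have "\<dots> = (\<Sum>u\<in>fsupp p. \<Sum>v\<in>fsupp q. fp_smult (q v * p u) (mon (v @ u)))"
    apply (rule sum.cong[OF refl])+
    apply (subst c, assumption, assumption)
    apply (simp add: mult.commute)
    done
  also have "\<dots> = (\<Sum>v\<in>fsupp q. \<Sum>u\<in>fsupp p. fp_smult (q v * p u) (mon (v @ u)))"
    by (rule sum.swap)
  also have "\<dots> = fp_mult q p"
    by (rule mult_expand[OF fp(2) fp(1), symmetric])
  finally show ?thesis .
qed

locale catA =
  fixes FO :: "'x set \<Rightarrow> 'x set" and FM :: "('x, 'k::field) mor \<Rightarrow> ('x, 'k) mor"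
  assumes cat: "cat_aut FO FM"
begin

definition FMf :: "'x set \<Rightarrow> 'x set \<Rightarrow> (('x, 'k) fpoly \<Rightarrow> ('x, 'k) fpoly) \<Rightarrow> ('x, 'k) fpoly \<Rightarrow> ('x, 'k) fpoly" where
  "FMf X Y f = mfun (FM (X, Y, f))"

lemma FO_bij: "bij_betw FO Obj Obj" and FM_bij: "bij_betw FM Mor Mor"
  using cat by (auto simp: cat_aut_def)

lemma FO_fin: "finite X \<Longrightarrow> finite (FO X)"
  using FO_bij by (auto simp: bij_betw_def Obj_iff)

lemma FO_inj: "finite X \<Longrightarrow> finite Y \<Longrightarrow> FO X = FO Y \<Longrightarrow> X = Y"
  using FO_bij by (auto simp: bij_betw_def inj_on_def Obj_iff)

lemma FO_surj: "finite Y \<Longrightarrow> \<exists>X. finite X \<and> FO X = Y"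
proof -
  assume "finite Y"
  then have "Y \<in> FO ` Obj" using FO_bij by (simp add: bij_betw_def Obj_iff)
  then obtain X where "X \<in> Obj" "Y = FO X" by blast
  then show ?thesis by (auto simp: Obj_iff)
qed

lemma FM_shape:
  assumes "finite X" "finite Y" "alg_hom X Y f"
  shows "FM (X, Y, f) = (FO X, FO Y, FMf X Y f)" and "alg_hom (FO X) (FO Y) (FMf X Y f)"
proof -
  have m: "(X, Y, f) \<in> Mor" using assms by (simp add: Mor_iff)
  then have "FM (X, Y, f) \<in> Mor" using FM_bij by (auto simp: bij_betw_def)
  moreover have "mdom (FM (X, Y, f)) = FO X" "mcod (FM (X, Y, f)) = FO Y"
    using cat m by (auto simp: cat_aut_def mdom_def mcod_def)
  ultimately show "FM (X, Y, f) = (FO X, FO Y, FMf X Y f)" and "alg_hom (FO X) (FO Y) (FMf X Y f)"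
    by (auto simp: FMf_def mdom_def mcod_def mfun_def Mor_def prod_eq_iff)
qed

lemma FM_inj:
  assumes "finite X" "finite Y" "alg_hom X Y f1" "alg_hom X Y f2" "FMf X Y f1 = FMf X Y f2"
  shows "f1 = f2"
proof -
  have "FM (X, Y, f1) = FM (X, Y, f2)"
    using FM_shape(1)[OF assms(1,2,3)] FM_shape(1)[OF assms(1,2,4)] assms(5) by simp
  moreover have "(X, Y, f1) \<in> Mor" "(X, Y, f2) \<in> Mor" using assms by (auto simp: Mor_iff)
  ultimately show ?thesis using FM_bij by (auto simp: bij_betw_def inj_on_def)
qed

lemma FM_surj:
  assumes X: "finite X" and Y: "finite Y" and g: "alg_hom (FO X) (FO Y) g"
  shows "\<exists>f. alg_hom X Y f \<and> FMf X Y f = g"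
proof -
  have "(FO X, FO Y, g) \<in> Mor" using assms by (simp add: Mor_iff FO_fin)
  then have "(FO X, FO Y, g) \<in> FM ` Mor" using FM_bij by (simp add: bij_betw_def)
  then obtain m where m: "m \<in> Mor" "FM m = (FO X, FO Y, g)" by (auto simp del: Mor_iff)
  obtain X' Y' f where mm: "m = (X', Y', f)" by (cases m) auto
  have fin: "finite X'" "finite Y'" "alg_hom X' Y' f" using m mm by (auto simp: Mor_iff)
  have "FO X' = FO X" "FO Y' = FO Y" using FM_shape(1)[OF fin] m mm by auto
  then have "X' = X" "Y' = Y" using FO_inj fin X Y by auto
  then show ?thesis using m mm fin FM_shape(1)[OF fin] by (auto simp: FMf_def mfun_def)
qed

lemma FM_comp:
  assumes "finite X" "finite Y" "finite Z" "alg_hom X Y f" "alg_hom Y Z g"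
  shows "FMf X Z (restr X (g \<circ> f)) = restr (FO X) (FMf Y Z g \<circ> FMf X Y f)"
proof -
  have "(X, Y, f) \<in> Mor" "(Y, Z, g) \<in> Mor" using assms by (auto simp: Mor_iff)
  moreover have "\<forall>f\<in>Mor. \<forall>g\<in>Mor. mcod f = mdom g \<longrightarrow> FM (mcomp g f) = mcomp (FM g) (FM f)"
    using cat unfolding cat_aut_def by blast
  ultimately have "FM (mcomp (Y, Z, g) (X, Y, f)) = mcomp (FM (Y, Z, g)) (FM (X, Y, f))"
    by (simp add: mdom_def mcod_def del: Mor_iff)
  have "FMf X Z (restr X (g \<circ> f)) = mfun (FM (mcomp (Y, Z, g) (X, Y, f)))"
    by (simp add: FMf_def mcomp_simp)
  also have "\<dots> = mfun (mcomp (FM (Y, Z, g)) (FM (X, Y, f)))"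
    using calculation \<open>FM (mcomp (Y, Z, g) (X, Y, f)) = _\<close> by simp
  also have "\<dots> = restr (FO X) (FMf Y Z g \<circ> FMf X Y f)"
    by (simp only: FM_shape(1)[OF assms(1,2,4)] FM_shape(1)[OF assms(2,3,5)] mcomp_simp) (simp add: mfun_def)
  finally show ?thesis .
qed

lemma FM_id:
  assumes "finite X"
  shows "FMf X X (restr X id) = restr (FO X) id"
proof -
  have "\<forall>X\<in>Obj. FM (mid X) = mid (FO X)" using cat unfolding cat_aut_def by blast
  then have "FM (mid X) = mid (FO X)" using assms by (simp add: Obj_iff)
  then show ?thesis by (simp add: mid_def FMf_def mfun_def)
qed

lemma FO_empty: "FO {} = {}"
proof (rule ccontr)
  assume ne: "FO {} \<noteq> {}"
  then obtain e where e: "e \<in> FO {}" by auto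
  let ?E = "FO {}"
  have fE: "finite ?E" by (simp add: FO_fin)
  have h1: "alg_hom ?E ?E (restr ?E id :: ('x, 'k) fpoly \<Rightarrow> _)" by (rule alg_hom_id)
  have h2: "alg_hom ?E ?E (homof (\<lambda>_. 0) ?E :: ('x, 'k) fpoly \<Rightarrow> _)" by (rule alg_hom_homof) simp
  obtain f1 where f1: "alg_hom {} {} f1" "FMf {} {} f1 = restr ?E id"
    using FM_surj[of "{}" "{}"] h1 by auto
  obtain f2 where f2: "alg_hom {} {} f2" "FMf {} {} f2 = homof (\<lambda>_. 0) ?E"
    using FM_surj[of "{}" "{}"] h2 by auto
  have "f1 = f2" by (rule hom_from_empty_unique[OF f1(1) f2(1)])
  then have "(restr ?E id :: ('x, 'k) fpoly \<Rightarrow> _) = homof (\<lambda>_. 0) ?E" using f1(2) f2(2) by (simp only:)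
  from fun_cong[OF this, of "mon [e]"]
  have "mon [e] = (0 :: ('x, 'k) fpoly)" using e by (simp add: homof_mon1)
  then have "mon [e] [e] = (0 :: ('x, 'k) fpoly) [e]" by simp
  then show False by (simp add: mon_def zero_fun_apply)
qed

end


lemma two_distinct:
  assumes "infinite (UNIV :: 'x set)"
  shows "\<exists>u v :: 'x. u \<noteq> v"
proof -
  obtain u :: 'x where True by simp
  have "UNIV \<noteq> {u}"
  proof
    assume "UNIV = {u}"
    then have "finite (UNIV :: 'x set)" by (metis finite.emptyI finite_insert)
    with assms show False by simp
  qed
  then obtain v where "v \<noteq> u" by auto
  then show ?thesis by blast
qed

lemma mon_uv_neq:
  assumes "u \<noteq> v"
  shows "(fp_mult (mon [u]) (mon [v]) :: ('x, 'k::field) fpoly) \<noteq> fp_mult (mon [v]) (mon [u])"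
proof
  assume "(fp_mult (mon [u]) (mon [v]) :: ('x, 'k::field) fpoly) = fp_mult (mon [v]) (mon [u])"
  then have "(mon [u, v] :: ('x, 'k) fpoly) [u, v] = mon [v, u] [u, v]" by (simp add: fp_mult_mon)
  then show False using assms by (simp add: mon_def)
qed

context catA
begin

lemma FO_single:
  assumes inf: "infinite (UNIV :: 'x set)"
  shows "\<exists>y0. FO {x} = {y0}"
proof (rule ccontr)
  assume nsg: "\<not> (\<exists>y0. FO {x} = {y0})"
  let ?B = "FO {x}"
  have fB: "finite ?B" by (simp add: FO_fin)
  have "?B \<noteq> {}"
  proof
    assume "?B = {}"
    then have "FO {x} = FO {}" by (simp add: FO_empty)
    then have "{x} = {}" using FO_inj by blast
    then show False by simp
  qed
  then obtain b1 where b1: "b1 \<in> ?B" by auto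
  have "?B \<noteq> {b1}" using nsg by blast
  then obtain b2 where b2: "b2 \<in> ?B" "b2 \<noteq> b1" using b1 by blast
  define B1 where "B1 = {b1}"
  define B2 where "B2 = ?B - {b1}"
  have fB1: "finite B1" and fB2: "finite B2" using fB by (auto simp: B1_def B2_def)
  obtain Y1 where Y1: "finite Y1" "FO Y1 = B1" using FO_surj[OF fB1] by blast
  obtain Y2 where Y2: "finite Y2" "FO Y2 = B2" using FO_surj[OF fB2] by blast
  have "Y1 \<noteq> {}" using Y1 FO_empty by (auto simp: B1_def)
  then obtain a1 where a1: "a1 \<in> Y1" by auto
  have "Y2 \<noteq> {}" using Y2 FO_empty b2 by (auto simp: B2_def)
  then obtain a2 where a2: "a2 \<in> Y2" by auto
  have subB1: "B1 \<subseteq> ?B" and subB2: "B2 \<subseteq> ?B" using b1 by (auto simp: B1_def B2_def)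
  define j1 :: "('x, 'k) fpoly \<Rightarrow> ('x, 'k) fpoly" where "j1 = homof (\<lambda>b. mon [b]) B1"
  define j2 :: "('x, 'k) fpoly \<Rightarrow> ('x, 'k) fpoly" where "j2 = homof (\<lambda>b. mon [b]) B2"
  have hj1: "alg_hom B1 ?B j1" unfolding j1_def by (rule alg_hom_homof) (use subB1 in auto)
  have hj2: "alg_hom B2 ?B j2" unfolding j2_def by (rule alg_hom_homof) (use subB2 in auto)
  obtain i1 where i1: "alg_hom Y1 {x} i1" "FMf Y1 {x} i1 = j1"
    using FM_surj[OF Y1(1), of "{x}"] hj1 Y1(2) by auto
  obtain i2 where i2: "alg_hom Y2 {x} i2" "FMf Y2 {x} i2 = j2"
    using FM_surj[OF Y2(1), of "{x}"] hj2 Y2(2) by auto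
  obtain u v :: 'x where uv: "u \<noteq> v" using two_distinct[OF inf] by blast
  let ?Z = "{u, v}"
  have fZ: "finite ?Z" by simp
  define f1 :: "('x, 'k) fpoly \<Rightarrow> ('x, 'k) fpoly" where "f1 = homof (\<lambda>_. mon [u]) Y1"
  define f2 :: "('x, 'k) fpoly \<Rightarrow> ('x, 'k) fpoly" where "f2 = homof (\<lambda>_. mon [v]) Y2"
  have hf1: "alg_hom Y1 ?Z f1" unfolding f1_def by (rule alg_hom_homof) simp
  have hf2: "alg_hom Y2 ?Z f2" unfolding f2_def by (rule alg_hom_homof) simp
  define f1' where "f1' = FMf Y1 ?Z f1"
  define f2' where "f2' = FMf Y2 ?Z f2"
  have hf1': "alg_hom B1 (FO ?Z) f1'" unfolding f1'_def using FM_shape(2)[OF Y1(1) fZ hf1] Y1(2) by simp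
  have hf2': "alg_hom B2 (FO ?Z) f2'" unfolding f2'_def using FM_shape(2)[OF Y2(1) fZ hf2] Y2(2) by simp
  define g where "g = homof (\<lambda>b. if b = b1 then f1' (mon [b]) else f2' (mon [b])) ?B"
  have hg: "alg_hom ?B (FO ?Z) g"
    unfolding g_def
  proof (rule alg_hom_homof)
    fix b assume b: "b \<in> ?B"
    show "(if b = b1 then f1' (mon [b]) else f2' (mon [b])) \<in> fpolys (FO ?Z)"
    proof (cases "b = b1")
      case True
      then show ?thesis using alg_hom_in[OF hf1', of "mon [b]"] by (simp add: B1_def)
    next
      case False
      then have "b \<in> B2" using b by (simp add: B2_def)
      then show ?thesis using False alg_hom_in[OF hf2', of "mon [b]"] by simp
    qed
  qed
  obtain f where f: "alg_hom {x} ?Z f" "FMf {x} ?Z f = g"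
    using FM_surj[of "{x}" ?Z g] hg by auto
  have c1: "restr Y1 (f \<circ> i1) = f1"
  proof (rule FM_inj[OF Y1(1) fZ])
    show "alg_hom Y1 ?Z (restr Y1 (f \<circ> i1))" by (rule alg_hom_comp[OF i1(1) f(1)])
    show "alg_hom Y1 ?Z f1" by (rule hf1)
    have "FMf Y1 ?Z (restr Y1 (f \<circ> i1)) = restr B1 (g \<circ> j1)"
      using FM_comp[OF Y1(1) _ fZ i1(1) f(1)] i1(2) f(2) Y1(2) by simp
    also have "\<dots> = f1'"
    proof (rule hom_eqI)
      show "alg_hom B1 (FO ?Z) (restr B1 (g \<circ> j1))" by (rule alg_hom_comp[OF hj1 hg])
      show "alg_hom B1 (FO ?Z) f1'" by (rule hf1')
      fix b assume "b \<in> B1"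
      then have bb: "b = b1" by (simp add: B1_def)
      have "j1 (mon [b]) = mon [b]" unfolding j1_def using \<open>b \<in> B1\<close> by (simp add: homof_mon1)
      then show "restr B1 (g \<circ> j1) (mon [b]) = f1' (mon [b])"
        using \<open>b \<in> B1\<close> b1 bb by (simp add: g_def homof_mon1)
    qed
    finally show "FMf Y1 ?Z (restr Y1 (f \<circ> i1)) = FMf Y1 ?Z f1" by (simp add: f1'_def)
  qed
  have c2: "restr Y2 (f \<circ> i2) = f2"
  proof (rule FM_inj[OF Y2(1) fZ])
    show "alg_hom Y2 ?Z (restr Y2 (f \<circ> i2))" by (rule alg_hom_comp[OF i2(1) f(1)])
    show "alg_hom Y2 ?Z f2" by (rule hf2)
    have "FMf Y2 ?Z (restr Y2 (f \<circ> i2)) = restr B2 (g \<circ> j2)"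
      using FM_comp[OF Y2(1) _ fZ i2(1) f(1)] i2(2) f(2) Y2(2) by simp
    also have "\<dots> = f2'"
    proof (rule hom_eqI)
      show "alg_hom B2 (FO ?Z) (restr B2 (g \<circ> j2))" by (rule alg_hom_comp[OF hj2 hg])
      show "alg_hom B2 (FO ?Z) f2'" by (rule hf2')
      fix b assume bB: "b \<in> B2"
      then have bb: "b \<noteq> b1" "b \<in> ?B" by (auto simp: B2_def)
      have "j2 (mon [b]) = mon [b]" unfolding j2_def using bB by (simp add: homof_mon1)
      then show "restr B2 (g \<circ> j2) (mon [b]) = f2' (mon [b])"
        using bB bb by (simp add: g_def homof_mon1)
    qed
    finally show "FMf Y2 ?Z (restr Y2 (f \<circ> i2)) = FMf Y2 ?Z f2" by (simp add: f2'_def)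
  qed
  define P1 where "P1 = i1 (mon [a1])"
  define P2 where "P2 = i2 (mon [a2])"
  have P1m: "P1 \<in> fpolys {x}" unfolding P1_def by (rule alg_hom_in[OF i1(1)]) (simp add: a1)
  have P2m: "P2 \<in> fpolys {x}" unfolding P2_def by (rule alg_hom_in[OF i2(1)]) (simp add: a2)
  have fP1: "f P1 = mon [u]"
  proof -
    have "restr Y1 (f \<circ> i1) (mon [a1]) = f1 (mon [a1])" using c1 by simp
    then show ?thesis using a1 by (simp add: P1_def f1_def homof_mon1)
  qed
  have fP2: "f P2 = mon [v]"
  proof -
    have "restr Y2 (f \<circ> i2) (mon [a2]) = f2 (mon [a2])" using c2 by simp
    then show ?thesis using a2 by (simp add: P2_def f2_def homof_mon1)
  qed
  have "fp_mult (f P1) (f P2) = f (fp_mult P1 P2)" using P1m P2m by (simp add: alg_hom_mult[OF f(1)])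
  also have "\<dots> = f (fp_mult P2 P1)" using comm_single[OF P1m P2m] by simp
  also have "\<dots> = fp_mult (f P2) (f P1)" using P1m P2m by (simp add: alg_hom_mult[OF f(1)])
  finally have "fp_mult (mon [u]) (mon [v]) = (fp_mult (mon [v]) (mon [u]) :: ('x, 'k) fpoly)"
    using fP1 fP2 by simp
  then show False using mon_uv_neq[OF uv] by blast
qed

end


locale catB = catA FO FM for FO :: "'x set \<Rightarrow> 'x set" and FM :: "('x, 'k::field) mor \<Rightarrow> ('x, 'k) mor" +
  fixes x0 y0 :: 'x
  assumes FOx0: "FO {x0} = {y0}"
begin

definition hA :: "'x set \<Rightarrow> ('x, 'k) fpoly \<Rightarrow> ('x, 'k) fpoly \<Rightarrow> ('x, 'k) fpoly" where
  "hA X a = homof (\<lambda>_. a) {x0}"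

definition s :: "'x set \<Rightarrow> ('x, 'k) fpoly \<Rightarrow> ('x, 'k) fpoly" where
  "s X a = FMf {x0} X (hA X a) (mon [y0])"

lemma alg_hom_hA: "a \<in> fpolys X \<Longrightarrow> alg_hom {x0} X (hA X a)"
  unfolding hA_def by (rule alg_hom_homof)

lemma hA_x0: "hA X a (mon [x0]) = a"
  by (simp add: hA_def homof_mon1)

lemma FMf_hA: "finite X \<Longrightarrow> a \<in> fpolys X \<Longrightarrow> alg_hom {y0} (FO X) (FMf {x0} X (hA X a))"
  using FM_shape(2)[of "{x0}" X "hA X a"] alg_hom_hA FOx0 by simp

lemma s_mem: "finite X \<Longrightarrow> a \<in> fpolys X \<Longrightarrow> s X a \<in> fpolys (FO X)"
  unfolding s_def by (rule alg_hom_in[OF FMf_hA]) auto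

lemma s_inj:
  assumes X: "finite X" and a: "a \<in> fpolys X" and a': "a' \<in> fpolys X" and e: "s X a = s X a'"
  shows "a = a'"
proof -
  have "FMf {x0} X (hA X a) = FMf {x0} X (hA X a')"
    by (rule hom_eqI[OF FMf_hA[OF X a] FMf_hA[OF X a']]) (use e in \<open>simp add: s_def\<close>)
  then have "hA X a = hA X a'" using FM_inj[OF _ X alg_hom_hA[OF a] alg_hom_hA[OF a']] by simp
  then have "hA X a (mon [x0]) = hA X a' (mon [x0])" by simp
  then show ?thesis by (simp only: hA_x0)
qed

lemma s_surj:
  assumes X: "finite X" and b: "b \<in> fpolys (FO X)"
  shows "\<exists>a\<in>fpolys X. s X a = b"
proof -
  have g: "alg_hom (FO {x0}) (FO X) (homof (\<lambda>_. b) {y0})"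
    unfolding FOx0 by (rule alg_hom_homof) (use b in auto)
  obtain f where f: "alg_hom {x0} X f" "FMf {x0} X f = homof (\<lambda>_. b) {y0}"
    using FM_surj[OF _ X g] by auto
  let ?a = "f (mon [x0])"
  have am: "?a \<in> fpolys X" by (rule alg_hom_in[OF f(1)]) simp
  have "f = hA X ?a"
    by (rule hom_eqI[OF f(1) alg_hom_hA[OF am]]) (simp add: hA_x0)
  then have "s X ?a = b" using f(2) by (simp add: s_def homof_mon1)
  then show ?thesis using am by blast
qed

lemma s_bij:
  assumes X: "finite X"
  shows "bij_betw (s X) (fpolys X) (fpolys (FO X))"
proof (rule bij_betw_imageI)
  show "inj_on (s X) (fpolys X)" by (rule inj_onI) (rule s_inj[OF X])
  show "s X ` fpolys X = fpolys (FO X)"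
  proof
    show "s X ` fpolys X \<subseteq> fpolys (FO X)" using s_mem[OF X] by blast
    show "fpolys (FO X) \<subseteq> s X ` fpolys X"
    proof
      fix b :: "('x, 'k) fpoly" assume "b \<in> fpolys (FO X)"
      then obtain a where "a \<in> fpolys X" "s X a = b" using s_surj[OF X] by blast
      then show "b \<in> s X ` fpolys X" by blast
    qed
  qed
qed

lemma s_nat:
  assumes X: "finite X" and Y: "finite Y" and nu: "alg_hom X Y \<nu>" and a: "a \<in> fpolys X"
  shows "s Y (\<nu> a) = FMf X Y \<nu> (s X a)"
proof -
  have na: "\<nu> a \<in> fpolys Y" by (rule alg_hom_in[OF nu a])
  have "restr {x0} (\<nu> \<circ> hA X a) = hA Y (\<nu> a)"
    by (rule hom_eqI[OF alg_hom_comp[OF alg_hom_hA[OF a] nu] alg_hom_hA[OF na]]) (simp add: hA_x0)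
  then have "FMf {x0} Y (hA Y (\<nu> a)) = restr (FO {x0}) (FMf X Y \<nu> \<circ> FMf {x0} X (hA X a))"
    using FM_comp[OF _ X Y alg_hom_hA[OF a] nu] by simp
  then show ?thesis by (simp add: s_def FOx0)
qed

lemma s_x0: "s {x0} (mon [x0]) = mon [y0]"
proof -
  have "hA {x0} (mon [x0]) = restr {x0} id"
    by (rule hom_eqI[OF alg_hom_hA alg_hom_id]) (auto simp: hA_x0)
  then show ?thesis using FM_id[of "{x0}"] by (simp add: s_def FOx0)
qed

definition kap :: "'k \<Rightarrow> 'k" where
  "kap c = s {} (cst c) []"

lemma s_empty_cst: "s {} (cst c) = cst (kap c)"
proof -
  have "s {} (cst c) \<in> fpolys {}" using s_mem[of "{}" "cst c"] FO_empty by simp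
  then show ?thesis by (simp add: kap_def fpolys_empty[symmetric])
qed

lemma s_cst:
  assumes X: "finite X"
  shows "s X (cst c) = cst (kap c)"
proof -
  let ?i = "homof (\<lambda>_. 0) {} :: ('x, 'k) fpoly \<Rightarrow> _"
  have hi: "alg_hom {} X ?i" by (rule alg_hom_homof) simp
  have "s X (?i (cst c)) = FMf {} X ?i (s {} (cst c))"
    by (rule s_nat[OF _ X hi]) simp_all
  moreover have "?i (cst c) = cst c" by (rule alg_hom_cst[OF hi])
  moreover have "FMf {} X ?i (cst (kap c)) = cst (kap c)"
    by (rule alg_hom_cst[OF FM_shape(2)[OF _ X hi]]) simp
  ultimately show ?thesis by (simp add: s_empty_cst)
qed

lemma kap_bij: "bij kap"
proof (rule bijI)
  show "inj kap"
  proof (rule injI)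
    fix a b assume "kap a = kap b"
    then have e: "s {} (cst a) = s {} (cst b)" by (simp add: s_empty_cst)
    have "cst a = (cst b :: ('x, 'k) fpoly)"
      by (rule s_inj[OF _ fpolys_cst fpolys_cst e]) simp
    then show "a = b" by (rule cst_inj)
  qed
  show "surj kap"
  proof -
    { fix d :: 'k
      have "cst d \<in> fpolys (FO {})" by simp
      then obtain a where a: "a \<in> fpolys {}" "s {} a = cst d" using s_surj[of "{}"] by blast
      have "a = cst (a [])" by (rule fpolys_empty[OF a(1)])
      then have "cst (kap (a [])) = (cst d :: ('x, 'k) fpoly)" using a(2) s_empty_cst by metis
      then have "kap (a []) = d" by (rule cst_inj)
      then have "d \<in> range kap" by blast }
    then show ?thesis by blast
  qed
qed

lemma ev_fext: "p \<in> fpolys X \<Longrightarrow> homof (\<lambda>_. cst a) X p = cst (ev p a)"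
  by (simp add: homof_def fext_cst_ev)

lemma s_points:
  assumes p: "p \<in> fpolys {x0}"
  shows "kap (ev p a) = ev (s {x0} p) (kap a)"
proof -
  let ?e = "homof (\<lambda>_. cst a) {x0} :: ('x, 'k) fpoly \<Rightarrow> _"
  have he: "alg_hom {x0} {} ?e" by (rule alg_hom_homof) simp
  have hG: "alg_hom {y0} {} (FMf {x0} {} ?e)" using FM_shape(2)[OF _ _ he] FOx0 FO_empty by simp
  have "FMf {x0} {} ?e (mon [y0]) = cst (kap a)"
  proof -
    have "FMf {x0} {} ?e (mon [y0]) = s {} (?e (mon [x0]))"
      using s_nat[OF _ _ he, of "mon [x0]"] s_x0 by simp
    also have "\<dots> = cst (kap a)" by (simp add: homof_mon1 s_empty_cst)
    finally show ?thesis .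
  qed
  then have G: "FMf {x0} {} ?e = homof (\<lambda>_. cst (kap a)) {y0}"
    using hom_eqI[OF hG alg_hom_homof[of "{y0}" "\<lambda>_. cst (kap a)" "{}"]] by (simp add: homof_mon1)
  have "cst (kap (ev p a)) = s {} (?e p)" using p by (simp add: ev_fext s_empty_cst)
  also have "\<dots> = FMf {x0} {} ?e (s {x0} p)" by (rule s_nat[OF _ _ he p]) auto
  also have "\<dots> = cst (ev (s {x0} p) (kap a))"
    unfolding G by (rule ev_fext) (use s_mem[OF _ p] FOx0 in simp)
  finally show ?thesis by (rule cst_inj)
qed

end


section \<open>Evaluation, univariate polynomials\<close>

lemma ev_as_fext:
  fixes p :: "('x, 'k::field) fpoly"
  shows "ev p a = fext (\<lambda>_. cst a :: ('x, 'k) fpoly) p []"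
proof -
  have "fext (\<lambda>_. cst a :: ('x, 'k) fpoly) p [] = (cst (ev p a) :: ('x, 'k) fpoly) []" by (simp only: fext_cst_ev)
  then show ?thesis by (simp add: cst_def)
qed

lemma ev_add:
  fixes p q :: "('x, 'k::field) fpoly"
  shows "finite (fsupp p) \<Longrightarrow> finite (fsupp q) \<Longrightarrow> ev (p + q) a = ev p a + ev q a"
  by (simp only: ev_as_fext fext_add plus_fun_apply)

lemma ev_smult:
  fixes p :: "('x, 'k::field) fpoly"
  shows "finite (fsupp p) \<Longrightarrow> ev (fp_smult c p) a = c * ev p a"
  by (simp only: ev_as_fext fext_smult fp_smult_apply)

lemma ev_cst[simp]: "ev (cst c :: ('x, 'k::field) fpoly) a = c"
  by (simp only: ev_as_fext fext_cst) (simp add: cst_def)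

lemma ev_mon1[simp]: "ev (mon [z] :: ('x, 'k::field) fpoly) a = a"
  by (simp only: ev_as_fext fext_mon gprod.simps fp_mult_cst_left fp_mult_one_right) (simp add: cst_def)

definition Pp :: "('x, 'k::field) fpoly \<Rightarrow> 'k poly" where
  "Pp p = (\<Sum>w\<in>fsupp p. monom (p w) (length w))"

lemma poly_Pp: "poly (Pp p) a = ev p a"
  by (simp add: Pp_def poly_sum poly_monom ev_def)

lemma coeff_Pp:
  assumes p: "p \<in> fpolys {z}"
  shows "coeff (Pp p) n = p (replicate n z)"
proof -
  have "coeff (Pp p) n = (\<Sum>w\<in>fsupp p. if w = replicate n z then p w else 0)"
    unfolding Pp_def coeff_sum
  proof (rule sum.cong[OF refl])
    fix w assume "w \<in> fsupp p"
    then have "set w \<subseteq> {z}" using p by (auto simp: fsupp_def dest: fpolys_set)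
    then have wr: "w = replicate (length w) z" by (rule replicate_of_set)
    have "(length w = n) = (w = replicate n z)"
    proof
      assume "length w = n" then show "w = replicate n z" using wr by simp
    next
      assume "w = replicate n z" then show "length w = n" by simp
    qed
    then show "coeff (monom (p w) (length w)) n = (if w = replicate n z then p w else 0)" by simp
  qed
  also have "\<dots> = p (replicate n z)"
    using fpolys_finite[OF p] by (simp add: sum.delta fsupp_def)
  finally show ?thesis .
qed

lemma Pp_inj:
  assumes p: "p \<in> fpolys {z}" and q: "q \<in> fpolys {z}" and e: "Pp p = Pp q"
  shows "p = q"
proof
  fix w
  show "p w = q w"
  proof (cases "set w \<subseteq> {z}")
    case True
    then have wr: "replicate (length w) z = w" by (rule replicate_of_set[symmetric])
    have "p w = coeff (Pp p) (length w)" using coeff_Pp[OF p, of "length w"] wr by simp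
    also have "\<dots> = coeff (Pp q) (length w)" using e by simp
    also have "\<dots> = q w" using coeff_Pp[OF q, of "length w"] wr by simp
    finally show ?thesis .
  next
    case False
    then have "p w = 0" "q w = 0" using fpolys_set[OF p] fpolys_set[OF q] by blast+
    then show ?thesis by simp
  qed
qed

lemma poly_eq_inf:
  assumes inf: "infinite (UNIV :: 'k::field set)" and e: "\<And>a. poly P a = poly Q (a :: 'k)"
  shows "P = Q"
proof (rule ccontr)
  assume "P \<noteq> Q"
  then have "P - Q \<noteq> 0" by simp
  then have "finite {x. poly (P - Q) x = 0}" by (rule poly_roots_finite)
  moreover have "{x. poly (P - Q) x = 0} = UNIV" using e by simp
  ultimately show False using inf by simp
qed

lemma ev_inj:
  assumes inf: "infinite (UNIV :: 'k::field set)"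
    and p: "p \<in> fpolys {z}" and q: "q \<in> fpolys {z}" and e: "\<And>a. ev p a = ev q (a :: 'k)"
  shows "p = q"
  by (rule Pp_inj[OF p q poly_eq_inf[OF inf]]) (simp add: poly_Pp e)

lemma aff:
  assumes inf: "infinite (UNIV :: 'k::field set)"
    and q: "q \<in> fpolys {z}" and q': "q' \<in> fpolys {z'}" and e: "\<And>t. ev q (ev q' t) = (t :: 'k)"
  shows "\<exists>\<alpha> \<beta>. \<alpha> \<noteq> 0 \<and> (\<forall>t. ev q t = \<alpha> * t + \<beta>)"
proof -
  have "pcompose (Pp q) (Pp q') = [:0, 1:]"
    by (rule poly_eq_inf[OF inf]) (simp add: poly_pcompose poly_Pp e)
  then have "degree (pcompose (Pp q) (Pp q')) = 1" by simp
  then have "degree (Pp q) * degree (Pp q') = 1" by (simp only: degree_pcompose)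
  then have d: "degree (Pp q) = 1" by simp
  then have "Pp q \<noteq> 0" by auto
  then have "coeff (Pp q) (degree (Pp q)) \<noteq> 0" by (rule leading_coeff_neq_0)
  then have nz: "coeff (Pp q) 1 \<noteq> 0" using d by simp
  have "\<forall>t. ev q t = coeff (Pp q) 1 * t + coeff (Pp q) 0"
    by (simp add: poly_Pp[symmetric] poly_altdef d)
  then show ?thesis using nz by blast
qed

lemma fa_add: "field_aut \<phi> \<Longrightarrow> \<phi> (a + b) = \<phi> a + \<phi> b" by (simp add: field_aut_def)
lemma fa_mult: "field_aut \<phi> \<Longrightarrow> \<phi> (a * b) = \<phi> a * \<phi> b" by (simp add: field_aut_def)
lemma fa_one: "field_aut \<phi> \<Longrightarrow> \<phi> 1 = 1" by (simp add: field_aut_def)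
lemma fa_bij: "field_aut \<phi> \<Longrightarrow> bij \<phi>" by (simp add: field_aut_def)

lemma fa_zero: "field_aut \<phi> \<Longrightarrow> \<phi> 0 = 0"
proof -
  assume f: "field_aut \<phi>"
  have "\<phi> 0 = \<phi> 0 + \<phi> 0" using fa_add[OF f, of 0 0] by simp
  then have "\<phi> 0 + 0 = \<phi> 0 + \<phi> 0" by simp
  then have "0 = \<phi> 0" by (rule add_left_imp_eq)
  then show ?thesis by simp
qed

lemma fa_inj: "field_aut \<phi> \<Longrightarrow> \<phi> a = \<phi> b \<Longrightarrow> a = b"
  using fa_bij[of \<phi>] by (simp add: bij_def inj_def)

lemma fa_eq0: "field_aut \<phi> \<Longrightarrow> (\<phi> a = 0) = (a = 0)"
proof -
  assume f: "field_aut \<phi>"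
  show ?thesis
  proof
    assume "\<phi> a = 0" then have "\<phi> a = \<phi> 0" by (simp add: fa_zero[OF f])
    then show "a = 0" by (rule fa_inj[OF f])
  qed (simp add: fa_zero[OF f])
qed

lemma fa_sum: "field_aut \<phi> \<Longrightarrow> \<phi> (\<Sum>i\<in>A. f i) = (\<Sum>i\<in>A. \<phi> (f i))"
  by (induction A rule: infinite_finite_induct) (simp_all add: fa_zero fa_add)

lemma fa_power: "field_aut \<phi> \<Longrightarrow> \<phi> (a ^ n) = \<phi> a ^ n"
  by (induction n) (simp_all add: fa_one fa_mult)

lemma fa_inv_right: "field_aut \<phi> \<Longrightarrow> \<phi> (inv \<phi> a) = a"
  using fa_bij[of \<phi>] by (simp add: bij_def surj_f_inv_f)

lemma fa_inv_left: "field_aut \<phi> \<Longrightarrow> inv \<phi> (\<phi> a) = a"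
  using fa_bij[of \<phi>] by (simp add: bij_def inv_f_f)

lemma field_aut_inv:
  assumes f: "field_aut \<phi>"
  shows "field_aut (inv \<phi>)"
  unfolding field_aut_def
proof (intro conjI allI)
  show "bij (inv \<phi>)" using f by (simp add: fa_bij bij_imp_bij_inv)
  fix a b
  show "inv \<phi> (a + b) = inv \<phi> a + inv \<phi> b"
    by (rule fa_inj[OF f]) (simp add: fa_add[OF f] fa_inv_right[OF f])
  show "inv \<phi> (a * b) = inv \<phi> a * inv \<phi> b"
    by (rule fa_inj[OF f]) (simp add: fa_mult[OF f] fa_inv_right[OF f])
next
  show "inv \<phi> 1 = 1" by (rule fa_inj[OF f]) (simp add: fa_one[OF f] fa_inv_right[OF f])
qed

section \<open>Semi-affine maps\<close>

lemma kappa_semiaffine: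
  fixes \<kappa> :: "'k::field \<Rightarrow> 'k"
  assumes bk: "bij \<kappa>"
    and tr: "\<And>c. \<exists>\<alpha> \<beta>. \<forall>a. \<kappa> (a + c) = \<alpha> * \<kappa> a + \<beta>"
    and sc: "\<And>l. l \<noteq> 0 \<Longrightarrow> \<exists>\<gamma> \<delta>. \<forall>a. \<kappa> (l * a) = \<gamma> * \<kappa> a + \<delta>"
  shows "\<exists>\<phi> k1 k0. field_aut \<phi> \<and> k1 \<noteq> 0 \<and> (\<forall>a. \<kappa> a = k1 * \<phi> a + k0)"
proof -
  have kinj: "\<kappa> a = \<kappa> b \<Longrightarrow> a = b" for a b using bk by (simp add: bij_def inj_def)
  have ksurj: "\<exists>a. \<kappa> a = t" for t
  proof -
    have "t \<in> range \<kappa>" using bk by (simp add: bij_def)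
    then show ?thesis by auto
  qed
  have add: "\<kappa> (a + c) = \<kappa> a + \<kappa> c - \<kappa> 0" for a c
  proof -
    obtain \<alpha> \<beta> where ab: "\<And>a. \<kappa> (a + c) = \<alpha> * \<kappa> a + \<beta>" using tr by blast
    show ?thesis
    proof (cases "\<alpha> = 1")
      case True
      then have "\<kappa> (0 + c) = \<kappa> 0 + \<beta>" using ab[of 0] by simp
      then show ?thesis using ab[of a] True by simp
    next
      case False
      obtain a0 where a0: "\<kappa> a0 = \<beta> / (1 - \<alpha>)" using ksurj by blast
      have "\<kappa> (a0 + c) = \<alpha> * (\<beta> / (1 - \<alpha>)) + \<beta>" using ab a0 by simp
      also have "\<dots> = \<beta> / (1 - \<alpha>)" using False by (simp add: field_simps)
      finally have "\<kappa> (a0 + c) = \<kappa> a0" using a0 by simp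
      then have "a0 + c = a0" by (rule kinj)
      then have "c = 0" by simp
      then show ?thesis by simp
    qed
  qed
  define k0 where "k0 = \<kappa> 0"
  define k1 where "k1 = \<kappa> 1 - k0"
  have k1nz: "k1 \<noteq> 0" using kinj[of 1 0] by (auto simp: k1_def k0_def)
  have mul: "(\<kappa> (l * a) - k0) * k1 = (\<kappa> l - k0) * (\<kappa> a - k0)" for l a
  proof (cases "l = 0")
    case True then show ?thesis by (simp add: k0_def)
  next
    case False
    obtain \<gamma> \<delta> where gd: "\<And>a. \<kappa> (l * a) = \<gamma> * \<kappa> a + \<delta>" using sc[OF False] by blast
    have z: "k0 = \<gamma> * k0 + \<delta>" using gd[of 0] by (simp add: k0_def)
    have one: "\<kappa> l = \<gamma> * \<kappa> 1 + \<delta>" using gd[of 1] by simp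
    have e1: "\<kappa> (l * a) - k0 = \<gamma> * (\<kappa> a - k0)" using gd[of a] z by (simp add: algebra_simps)
    have e2: "\<kappa> l - k0 = \<gamma> * k1" using one z by (simp add: k1_def algebra_simps)
    show ?thesis unfolding e1 e2 by (simp add: algebra_simps)
  qed
  define \<phi> where "\<phi> a = (\<kappa> a - k0) / k1" for a
  have fa: "field_aut \<phi>"
    unfolding field_aut_def
  proof (intro conjI allI)
    fix a b
    have h: "\<kappa> (a + b) - k0 = (\<kappa> a - k0) + (\<kappa> b - k0)" using add[of a b] by (simp add: k0_def)
    show "\<phi> (a + b) = \<phi> a + \<phi> b" unfolding \<phi>_def h by (rule add_divide_distrib)
    have "\<phi> (a * b) = ((\<kappa> (a * b) - k0) * k1) / (k1 * k1)" using k1nz by (simp add: \<phi>_def)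
    also have "\<dots> = ((\<kappa> a - k0) * (\<kappa> b - k0)) / (k1 * k1)" by (simp only: mul)
    also have "\<dots> = \<phi> a * \<phi> b" by (simp add: \<phi>_def)
    finally show "\<phi> (a * b) = \<phi> a * \<phi> b" .
  next
    show "\<phi> 1 = 1" using k1nz by (simp add: \<phi>_def k1_def)
    show "bij \<phi>"
    proof (rule bijI)
      show "inj \<phi>" by (rule injI) (use k1nz kinj in \<open>simp add: \<phi>_def\<close>)
      show "surj \<phi>"
      proof -
        { fix t obtain a where "\<kappa> a = t * k1 + k0" using ksurj by blast
          then have "\<phi> a = t" using k1nz by (simp add: \<phi>_def)
          then have "t \<in> range \<phi>" by blast }
        then show ?thesis by blast
      qed
    qed
  qed
  have "\<forall>a. \<kappa> a = k1 * \<phi> a + k0" using k1nz by (simp add: \<phi>_def)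
  then show ?thesis using fa k1nz by blast
qed

lemma coeff_map_apply: "coeff_map \<phi> p w = \<phi> (p w)"
  by (simp add: coeff_map_def)

lemma coeff_map_add: "field_aut \<phi> \<Longrightarrow> coeff_map \<phi> (p + q) = coeff_map \<phi> p + coeff_map \<phi> q"
  by (simp add: coeff_map_def fun_eq_iff fun_ops fa_add)

lemma coeff_map_smult: "field_aut \<phi> \<Longrightarrow> coeff_map \<phi> (fp_smult c p) = fp_smult (\<phi> c) (coeff_map \<phi> p)"
  by (simp add: coeff_map_def fun_eq_iff fp_smult_def fa_mult)

lemma coeff_map_mult: "field_aut \<phi> \<Longrightarrow> coeff_map \<phi> (fp_mult p q) = fp_mult (coeff_map \<phi> p) (coeff_map \<phi> q)"
  by (simp add: coeff_map_def fun_eq_iff fp_mult_def fa_mult fa_sum)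

lemma coeff_map_one: "field_aut \<phi> \<Longrightarrow> coeff_map \<phi> fp_one = fp_one"
  by (simp add: coeff_map_def fun_eq_iff fp_one_def fa_one fa_zero)

lemma coeff_map_cst: "field_aut \<phi> \<Longrightarrow> coeff_map \<phi> (cst c) = cst (\<phi> c)"
  by (simp add: coeff_map_def fun_eq_iff cst_def fa_zero)

lemma coeff_map_zero: "field_aut \<phi> \<Longrightarrow> coeff_map \<phi> 0 = 0"
  by (simp add: coeff_map_def fun_eq_iff fun_ops fa_zero)

lemma fsupp_coeff_map: "field_aut \<phi> \<Longrightarrow> fsupp (coeff_map \<phi> p) = fsupp p"
  by (simp add: fsupp_def coeff_map_def fa_eq0)

lemma coeff_map_fpolys: "field_aut \<phi> \<Longrightarrow> (coeff_map \<phi> p \<in> fpolys X) = (p \<in> fpolys X)"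
  by (simp add: fpolys_iff fsupp_coeff_map)

lemma coeff_map_inv1: "field_aut \<phi> \<Longrightarrow> coeff_map (inv \<phi>) (coeff_map \<phi> p) = p"
  by (simp add: coeff_map_def fun_eq_iff fa_inv_left)

lemma coeff_map_inv2: "field_aut \<phi> \<Longrightarrow> coeff_map \<phi> (coeff_map (inv \<phi>) p) = p"
  by (simp add: coeff_map_def fun_eq_iff fa_inv_right)

lemma ev_coeff_map:
  assumes f: "field_aut \<phi>"
  shows "ev (coeff_map (inv \<phi>) q) t = inv \<phi> (ev q (\<phi> t))"
proof -
  have fi: "field_aut (inv \<phi>)" by (rule field_aut_inv[OF f])
  have "inv \<phi> (ev q (\<phi> t)) = (\<Sum>w\<in>fsupp q. inv \<phi> (q w) * inv \<phi> (\<phi> t) ^ length w)"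
    by (simp add: ev_def fa_sum[OF fi] fa_mult[OF fi] fa_power[OF fi])
  also have "\<dots> = ev (coeff_map (inv \<phi>) q) t"
    by (simp add: ev_def fsupp_coeff_map[OF fi] fa_inv_left[OF f] coeff_map_apply)
  finally show ?thesis by simp
qed


lemma pow_eq_self:
  assumes inf: "infinite (UNIV :: 'k::field set)" and h: "\<And>l :: 'k. l ^ n * r = l * r" and r: "r \<noteq> 0"
  shows "n = 1"
proof -
  have "\<And>l :: 'k. l ^ n = l" using h r by simp
  then have "monom (1 :: 'k) n = [:0, 1:]"
    by (intro poly_eq_inf[OF inf]) (simp add: poly_monom)
  then have "degree (monom (1 :: 'k) n) = degree [:0, (1 :: 'k):]" by simp
  then show ?thesis by (simp add: degree_monom_eq)
qed

lemma length_two_letters: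
  assumes "set w \<subseteq> {x, y}" "x \<noteq> y"
  shows "length w = count_list w x + count_list w y"
  using assms by (induction w) auto

lemma two_letter_words:
  assumes "set w \<subseteq> {x, y}" "x \<noteq> y" "count_list w x = 1" "count_list w y = 1"
  shows "w = [x, y] \<or> w = [y, x]"
proof -
  have "length w = 2" using length_two_letters[OF assms(1,2)] assms(3,4) by simp
  then obtain a b where w: "w = [a, b]"
    by (metis One_nat_def Suc_1 length_0_conv length_Suc_conv)
  then show ?thesis using assms by (auto split: if_splits)
qed

lemma count_prod_list: "prod_list (map (\<lambda>v. if v = x then l else 1) w) = l ^ count_list w x"
  by (induction w) auto

lemma prod_list_const: "prod_list (map (\<lambda>v. l) w) = l ^ length w"
  by (induction w) auto

lemma homof_lin2:
  assumes "set w1 \<subseteq> X" "set w2 \<subseteq> X"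
  shows "homof g X (fp_smult a (mon w1) + fp_smult b (mon w2)) = fp_smult a (gprod g w1) + fp_smult b (gprod g w2)"
proof -
  have "fp_smult a (mon w1) + fp_smult b (mon w2) \<in> fpolys X" using assms by simp
  then show ?thesis
    by (simp add: homof_def fext_add fext_smult fext_mon)
qed

locale natsys =
  fixes G :: "'x set \<Rightarrow> 'x set" and u :: "'x set \<Rightarrow> ('x, 'k::field) fpoly \<Rightarrow> ('x, 'k) fpoly"
    and st :: "'x set \<Rightarrow> 'x set \<Rightarrow> (('x, 'k) fpoly \<Rightarrow> ('x, 'k) fpoly) \<Rightarrow> ('x, 'k) fpoly \<Rightarrow> ('x, 'k) fpoly"
    and z0 :: 'x
  assumes G_fin: "finite X \<Longrightarrow> finite (G X)"
    and u_bij: "finite X \<Longrightarrow> bij_betw (u X) (fpolys X) (fpolys (G X))"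
    and st_hom: "finite X \<Longrightarrow> finite Y \<Longrightarrow> alg_hom X Y \<nu> \<Longrightarrow> alg_hom (G X) (G Y) (st X Y \<nu>)"
    and nat: "finite X \<Longrightarrow> finite Y \<Longrightarrow> alg_hom X Y \<nu> \<Longrightarrow> a \<in> fpolys X \<Longrightarrow> u Y (\<nu> a) = st X Y \<nu> (u X a)"
    and u_cst: "finite X \<Longrightarrow> u X (cst c) = cst c"
    and u_scal: "u {z0} (fp_smult l (mon [z0])) = fp_smult l (u {z0} (mon [z0]))"
    and infk: "infinite (UNIV :: 'k set)"
begin

lemma u_mem: "finite X \<Longrightarrow> a \<in> fpolys X \<Longrightarrow> u X a \<in> fpolys (G X)"
  using u_bij by (auto simp: bij_betw_def)

lemma u_inj: "finite X \<Longrightarrow> a \<in> fpolys X \<Longrightarrow> b \<in> fpolys X \<Longrightarrow> u X a = u X b \<Longrightarrow> a = b"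
  using u_bij by (auto simp: bij_betw_def inj_on_def)

definition pre :: "'x set \<Rightarrow> ('x, 'k) fpoly \<Rightarrow> ('x, 'k) fpoly" where
  "pre X b = inv_into (fpolys X) (u X) b"

lemma pre_mem: "finite X \<Longrightarrow> b \<in> fpolys (G X) \<Longrightarrow> pre X b \<in> fpolys X"
  unfolding pre_def using u_bij by (metis bij_betw_def inv_into_into)

lemma u_pre: "finite X \<Longrightarrow> b \<in> fpolys (G X) \<Longrightarrow> u X (pre X b) = b"
  unfolding pre_def using u_bij by (metis bij_betw_inv_into_right)

lemma u_zero: "finite X \<Longrightarrow> u X 0 = 0"
  using u_cst[of X 0] by simp

lemma u_one: "finite X \<Longrightarrow> u X fp_one = fp_one"
  using u_cst[of X 1] by (simp add: cst_one)

lemma u_smult: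
  assumes X: "finite X" and a: "a \<in> fpolys X"
  shows "u X (fp_smult l a) = fp_smult l (u X a)"
proof -
  let ?m = "homof (\<lambda>_. a) {z0}"
  have hm: "alg_hom {z0} X ?m" by (rule alg_hom_homof) (use a in simp)
  have m0: "?m (mon [z0]) = a" by (simp add: homof_mon1)
  have mz: "u {z0} (mon [z0]) \<in> fpolys (G {z0})" by (rule u_mem) simp_all
  have "u X (fp_smult l a) = u X (?m (fp_smult l (mon [z0])))"
    using alg_hom_smult[OF hm, of "mon [z0]" l] m0 by simp
  also have "\<dots> = st {z0} X ?m (u {z0} (fp_smult l (mon [z0])))"
    by (rule nat[OF _ X hm]) simp_all
  also have "\<dots> = fp_smult l (st {z0} X ?m (u {z0} (mon [z0])))"
    by (simp add: u_scal alg_hom_smult[OF st_hom[OF _ X hm] mz])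
  also have "\<dots> = fp_smult l (u X a)"
    using nat[OF _ X hm, of "mon [z0]"] m0 by simp
  finally show ?thesis .
qed

definition nu2 :: "'x \<Rightarrow> 'x \<Rightarrow> ('x, 'k) fpoly \<Rightarrow> ('x, 'k) fpoly \<Rightarrow> ('x, 'k) fpoly \<Rightarrow> ('x, 'k) fpoly" where
  "nu2 x y a b = homof (\<lambda>v. if v = x then a else b) {x, y}"

lemma nu2_hom: "a \<in> fpolys X \<Longrightarrow> b \<in> fpolys X \<Longrightarrow> alg_hom {x, y} X (nu2 x y a b)"
  unfolding nu2_def by (rule alg_hom_homof) auto

lemma nu2_x: "nu2 x y a b (mon [x]) = a"
  by (simp add: nu2_def homof_mon1)

lemma nu2_y: "x \<noteq> y \<Longrightarrow> nu2 x y a b (mon [y]) = b"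
  by (simp add: nu2_def homof_mon1)

lemma op_transfer:
  assumes xy: "x \<noteq> y" and X: "finite X" and a: "a \<in> fpolys X" and b: "b \<in> fpolys X"
    and P: "P \<in> fpolys {x, y}"
  shows "u X (nu2 x y a b P) = st {x, y} X (nu2 x y a b) (u {x, y} P)"
  by (rule nat[OF _ X nu2_hom[OF a b] P]) simp

end


context natsys
begin

lemma add_law:
  fixes x y :: 'x and X :: "'x set"
  assumes xy: "x \<noteq> y" and X: "finite X" and a: "a \<in> fpolys X" and b: "b \<in> fpolys X"
  shows "u X (a + b) = u X a + u X b"
proof -
  define X2 where "X2 = {x, y}"
  have fX2: "finite X2" by (simp add: X2_def)
  define mx :: "('x, 'k) fpoly" where "mx = mon [x]"
  define my :: "('x, 'k) fpoly" where "my = mon [y]"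
  have mx: "mx \<in> fpolys X2" and my: "my \<in> fpolys X2" by (simp_all add: mx_def my_def X2_def)
  have ux: "u X2 mx \<in> fpolys (G X2)" and uy: "u X2 my \<in> fpolys (G X2)"
    using u_mem[OF fX2] mx my by auto
  define R where "R = pre X2 (u X2 mx + u X2 my)"
  have R: "R \<in> fpolys X2" unfolding R_def by (rule pre_mem[OF fX2]) (simp add: ux uy)
  have uR: "u X2 R = u X2 mx + u X2 my" unfolding R_def by (rule u_pre[OF fX2]) (simp add: ux uy)
  have key: "u Y (nu2 x y c d R) = u Y c + u Y d"
    if Y: "finite Y" and c: "c \<in> fpolys Y" and d: "d \<in> fpolys Y" for Y c d
  proof -
    have hn: "alg_hom X2 Y (nu2 x y c d)" unfolding X2_def by (rule nu2_hom[OF c d])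
    have "u Y (nu2 x y c d R) = st X2 Y (nu2 x y c d) (u X2 R)" by (rule nat[OF fX2 Y hn R])
    also have "\<dots> = st X2 Y (nu2 x y c d) (u X2 mx) + st X2 Y (nu2 x y c d) (u X2 my)"
      unfolding uR by (rule alg_hom_add[OF st_hom[OF fX2 Y hn] ux uy])
    also have "\<dots> = u Y (nu2 x y c d mx) + u Y (nu2 x y c d my)"
      using nat[OF fX2 Y hn mx] nat[OF fX2 Y hn my] by simp
    also have "\<dots> = u Y c + u Y d" by (simp add: mx_def my_def nu2_x nu2_y[OF xy])
    finally show ?thesis .
  qed
  have hom: "l ^ length w * R w = l * R w" for l w
  proof -
    have lx: "fp_smult l mx \<in> fpolys X2" and ly: "fp_smult l my \<in> fpolys X2" using mx my by simp_all
    have e1: "u X2 (nu2 x y (fp_smult l mx) (fp_smult l my) R) = u X2 (fp_smult l R)"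
      using key[OF fX2 lx ly] u_smult[OF fX2 mx] u_smult[OF fX2 my] u_smult[OF fX2 R] uR
      by (simp add: fp_smult_add)
    have n: "nu2 x y (fp_smult l mx) (fp_smult l my) = homof (\<lambda>v. fp_smult l (mon [v])) X2"
      unfolding nu2_def X2_def by (rule homof_cong) (auto simp: mx_def my_def)
    have "nu2 x y (fp_smult l mx) (fp_smult l my) R = fp_smult l R"
    proof (rule u_inj[OF fX2 _ _ e1])
      show "nu2 x y (fp_smult l mx) (fp_smult l my) R \<in> fpolys X2"
        by (rule alg_hom_in[OF nu2_hom[OF lx ly] R[unfolded X2_def], folded X2_def])
      show "fp_smult l R \<in> fpolys X2" using R by simp
    qed
    then have "(\<lambda>w. prod_list (map (\<lambda>v. l) w) * R w) = fp_smult l R"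
      using R n by (simp add: homof_def fext_diag fpolys_finite)
    then have "prod_list (map (\<lambda>v. l) w) * R w = l * R w" by (metis fp_smult_apply)
    then show ?thesis by (simp add: prod_list_const)
  qed
  have supp: "w = [x] \<or> w = [y]" if "R w \<noteq> 0" for w
  proof -
    have "length w = 1" by (rule pow_eq_self[OF infk hom that])
    moreover have "set w \<subseteq> X2" using fpolys_set[OF R that] .
    ultimately show ?thesis by (cases w) (auto simp: X2_def)
  qed
  define \<alpha> where "\<alpha> = R [x]"
  define \<beta> where "\<beta> = R [y]"
  have Rexp: "R = fp_smult \<alpha> mx + fp_smult \<beta> my"
  proof
    fix w
    show "R w = (fp_smult \<alpha> mx + fp_smult \<beta> my) w"
      using supp[of w] xy by (cases "R w = 0") (auto simp: \<alpha>_def \<beta>_def mx_def my_def mon_def fun_ops fp_smult_def)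
  qed
  have nuR: "nu2 x y c d R = fp_smult \<alpha> c + fp_smult \<beta> d" for c d
    unfolding Rexp mx_def my_def nu2_def using xy
    by (subst homof_lin2) auto
  have a1: "\<alpha> = 1"
  proof -
    have z: "(0 :: ('x, 'k) fpoly) \<in> fpolys X2" by simp
    have "u X2 (nu2 x y mx 0 R) = u X2 mx" using key[OF fX2 mx z] u_zero[OF fX2] by simp
    then have "nu2 x y mx 0 R = mx"
      by (rule u_inj[OF fX2 alg_hom_in[OF nu2_hom[OF mx z] R[unfolded X2_def], folded X2_def] mx])
    then have "fp_smult \<alpha> mx = mx" by (simp add: nuR)
    then have "fp_smult \<alpha> mx [x] = mx [x]" by simp
    then show ?thesis by (simp add: mx_def mon_def fp_smult_def)
  qed
  have b1: "\<beta> = 1"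
  proof -
    have z: "(0 :: ('x, 'k) fpoly) \<in> fpolys X2" by simp
    have "u X2 (nu2 x y 0 my R) = u X2 my" using key[OF fX2 z my] u_zero[OF fX2] by simp
    then have "nu2 x y 0 my R = my"
      by (rule u_inj[OF fX2 alg_hom_in[OF nu2_hom[OF z my] R[unfolded X2_def], folded X2_def] my])
    then have "fp_smult \<beta> my = my" by (simp add: nuR)
    then have "fp_smult \<beta> my [y] = my [y]" by simp
    then show ?thesis by (simp add: my_def mon_def fp_smult_def)
  qed
  have "nu2 x y a b R = a + b" by (simp add: nuR a1 b1)
  then show ?thesis using key[OF X a b] by simp
qed

end


context natsys
begin

lemma mult_law:
  fixes x y z :: 'x
  assumes xy: "x \<noteq> y" and xz: "x \<noteq> z" and yz: "y \<noteq> z"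
  shows "(\<forall>X a b. finite X \<longrightarrow> a \<in> fpolys X \<longrightarrow> b \<in> fpolys X \<longrightarrow> u X (fp_mult a b) = fp_mult (u X a) (u X b))
       \<or> (\<forall>X a b. finite X \<longrightarrow> a \<in> fpolys X \<longrightarrow> b \<in> fpolys X \<longrightarrow> u X (fp_mult a b) = fp_mult (u X b) (u X a))"
proof -
  define X2 where "X2 = {x, y}"
  have fX2: "finite X2" by (simp add: X2_def)
  define mx :: "('x, 'k) fpoly" where "mx = mon [x]"
  define my :: "('x, 'k) fpoly" where "my = mon [y]"
  define mz :: "('x, 'k) fpoly" where "mz = mon [z]"
  have mx: "mx \<in> fpolys X2" and my: "my \<in> fpolys X2" by (simp_all add: mx_def my_def X2_def)
  have ux: "u X2 mx \<in> fpolys (G X2)" and uy: "u X2 my \<in> fpolys (G X2)"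
    using u_mem[OF fX2] mx my by auto
  define S where "S = pre X2 (fp_mult (u X2 mx) (u X2 my))"
  have S: "S \<in> fpolys X2" unfolding S_def by (rule pre_mem[OF fX2]) (simp add: ux uy)
  have uS: "u X2 S = fp_mult (u X2 mx) (u X2 my)" unfolding S_def by (rule u_pre[OF fX2]) (simp add: ux uy)
  have nuin: "nu2 x y c d S \<in> fpolys Y" if "c \<in> fpolys Y" "d \<in> fpolys Y" for Y c d
    by (rule alg_hom_in[OF nu2_hom[OF that] S[unfolded X2_def]])
  have key: "u Y (nu2 x y c d S) = fp_mult (u Y c) (u Y d)"
    if Y: "finite Y" and c: "c \<in> fpolys Y" and d: "d \<in> fpolys Y" for Y c d
  proof -
    have hn: "alg_hom X2 Y (nu2 x y c d)" unfolding X2_def by (rule nu2_hom[OF c d])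
    have "u Y (nu2 x y c d S) = st X2 Y (nu2 x y c d) (u X2 S)" by (rule nat[OF fX2 Y hn S])
    also have "\<dots> = fp_mult (st X2 Y (nu2 x y c d) (u X2 mx)) (st X2 Y (nu2 x y c d) (u X2 my))"
      unfolding uS by (rule alg_hom_mult[OF st_hom[OF fX2 Y hn] ux uy])
    also have "\<dots> = fp_mult (u Y (nu2 x y c d mx)) (u Y (nu2 x y c d my))"
      using nat[OF fX2 Y hn mx] nat[OF fX2 Y hn my] by simp
    also have "\<dots> = fp_mult (u Y c) (u Y d)" by (simp add: mx_def my_def nu2_x nu2_y[OF xy])
    finally show ?thesis .
  qed
  have homx: "l ^ count_list w x * S w = l * S w" for l w
  proof -
    have lx: "fp_smult l mx \<in> fpolys X2" using mx by simp
    have e1: "u X2 (nu2 x y (fp_smult l mx) my S) = u X2 (fp_smult l S)"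
      using key[OF fX2 lx my] u_smult[OF fX2 mx] u_smult[OF fX2 S] uS
      by (simp add: fp_mult_smult_left)
    have n: "nu2 x y (fp_smult l mx) my = homof (\<lambda>v. fp_smult (if v = x then l else 1) (mon [v])) X2"
      unfolding nu2_def X2_def by (rule homof_cong) (auto simp: mx_def my_def)
    have "nu2 x y (fp_smult l mx) my S = fp_smult l S"
      by (rule u_inj[OF fX2 nuin[OF lx my, folded X2_def] _ e1]) (use S in simp)
    then have "(\<lambda>w. prod_list (map (\<lambda>v. if v = x then l else 1) w) * S w) = fp_smult l S"
      using S n by (simp add: homof_def fext_diag fpolys_finite)
    then have "prod_list (map (\<lambda>v. if v = x then l else 1) w) * S w = l * S w" by (metis fp_smult_apply)
    then show ?thesis by (simp add: count_prod_list)
  qed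
  have homy: "l ^ count_list w y * S w = l * S w" for l w
  proof -
    have ly: "fp_smult l my \<in> fpolys X2" using my by simp
    have e1: "u X2 (nu2 x y mx (fp_smult l my) S) = u X2 (fp_smult l S)"
      using key[OF fX2 mx ly] u_smult[OF fX2 my] u_smult[OF fX2 S] uS
      by (simp add: fp_mult_smult_right)
    have n: "nu2 x y mx (fp_smult l my) = homof (\<lambda>v. fp_smult (if v = y then l else 1) (mon [v])) X2"
      unfolding nu2_def X2_def by (rule homof_cong) (use xy in \<open>auto simp: mx_def my_def\<close>)
    have "nu2 x y mx (fp_smult l my) S = fp_smult l S"
      by (rule u_inj[OF fX2 nuin[OF mx ly, folded X2_def] _ e1]) (use S in simp)
    then have "(\<lambda>w. prod_list (map (\<lambda>v. if v = y then l else 1) w) * S w) = fp_smult l S"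
      using S n by (simp add: homof_def fext_diag fpolys_finite)
    then have "prod_list (map (\<lambda>v. if v = y then l else 1) w) * S w = l * S w" by (metis fp_smult_apply)
    then show ?thesis by (simp add: count_prod_list)
  qed
  have supp: "w = [x, y] \<or> w = [y, x]" if "S w \<noteq> 0" for w
  proof (rule two_letter_words[OF _ xy])
    show "set w \<subseteq> {x, y}" using fpolys_set[OF S that] by (simp add: X2_def)
    show "count_list w x = 1" by (rule pow_eq_self[OF infk homx that])
    show "count_list w y = 1" by (rule pow_eq_self[OF infk homy that])
  qed
  define \<alpha> where "\<alpha> = S [x, y]"
  define \<beta> where "\<beta> = S [y, x]"
  have Sexp: "S = fp_smult \<alpha> (mon [x, y]) + fp_smult \<beta> (mon [y, x])"
  proof
    fix w
    show "S w = (fp_smult \<alpha> (mon [x, y]) + fp_smult \<beta> (mon [y, x])) w"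
      using supp[of w] xy by (cases "S w = 0") (auto simp: \<alpha>_def \<beta>_def mon_def fun_ops fp_smult_def)
  qed
  have nuS: "nu2 x y c d S = fp_smult \<alpha> (fp_mult c d) + fp_smult \<beta> (fp_mult d c)" for c d
    unfolding Sexp nu2_def using xy
    by (subst homof_lin2) auto
  have ab1: "\<alpha> + \<beta> = 1"
  proof -
    have o: "(fp_one :: ('x, 'k) fpoly) \<in> fpolys X2" by simp
    have "u X2 (nu2 x y mx fp_one S) = u X2 mx" using key[OF fX2 mx o] u_one[OF fX2] by simp
    then have "nu2 x y mx fp_one S = mx"
      by (rule u_inj[OF fX2 nuin[OF mx o, folded X2_def] mx])
    then have "fp_smult \<alpha> mx + fp_smult \<beta> mx = mx" by (simp add: nuS)
    then have "(fp_smult \<alpha> mx + fp_smult \<beta> mx) [x] = mx [x]" by simp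
    then show ?thesis by (simp add: mx_def mon_def fp_smult_def fun_ops)
  qed
  have ab0: "\<alpha> * \<beta> = 0"
  proof -
    define X3 where "X3 = {x, y, z}"
    have fX3: "finite X3" by (simp add: X3_def)
    have sub: "X2 \<subseteq> X3" by (auto simp: X2_def X3_def)
    have mx3: "mx \<in> fpolys X3" and my3: "my \<in> fpolys X3" and mz3: "mz \<in> fpolys X3"
      by (simp_all add: mx_def my_def mz_def X3_def)
    have S3: "S \<in> fpolys X3" by (rule fpolys_mono[OF sub S])
    have "nu2 x y mx my S = fp_smult \<alpha> (fp_mult mx my) + fp_smult \<beta> (fp_mult my mx)" by (rule nuS)
    also have "\<dots> = S" by (simp add: Sexp mx_def my_def fp_mult_mon)
    finally have "nu2 x y mx my S = S" .
    then have uS3: "u X3 S = fp_mult (u X3 mx) (u X3 my)" using key[OF fX3 mx3 my3] by simp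
    define S' where "S' = nu2 x y my mz S"
    have S'3: "S' \<in> fpolys X3" unfolding S'_def by (rule nuin[OF my3 mz3])
    have uS'3: "u X3 S' = fp_mult (u X3 my) (u X3 mz)" unfolding S'_def by (rule key[OF fX3 my3 mz3])
    have "u X3 (nu2 x y S mz S) = u X3 (nu2 x y mx S' S)"
      using key[OF fX3 S3 mz3] key[OF fX3 mx3 S'3] uS3 uS'3 by (simp add: fp_mult_assoc)
    then have eq: "nu2 x y S mz S = nu2 x y mx S' S"
      by (rule u_inj[OF fX3 nuin[OF S3 mz3] nuin[OF mx3 S'3]])
    have L: "nu2 x y S mz S [y, x, z] = \<alpha> * \<beta>"
      using xy xz yz
      apply (simp only: nuS)
      apply (simp add: Sexp mz_def fp_mult_add_left fp_mult_add_right fp_mult_smult_left fp_mult_smult_right fp_mult_mon)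
      apply (simp add: fun_ops fp_smult_apply mon_apply)
      done
    have R: "nu2 x y mx S' S [y, x, z] = 0"
      using xy xz yz
      apply (simp only: nuS S'_def)
      apply (simp add: Sexp mx_def my_def mz_def fp_mult_add_left fp_mult_add_right fp_mult_smult_left fp_mult_smult_right fp_mult_mon)
      apply (simp add: fun_ops fp_smult_apply mon_apply)
      done
    show ?thesis using L R eq by simp
  qed
  show ?thesis
  proof (cases "\<alpha> = 0")
    case True
    then have bv: "\<beta> = 1" using ab1 by simp
    have "u X (fp_mult a b) = fp_mult (u X b) (u X a)"
      if X: "finite X" and a: "a \<in> fpolys X" and b: "b \<in> fpolys X" for X a b
    proof -
      have "nu2 x y b a S = fp_mult a b" using True \<open>\<beta> = 1\<close> by (simp add: nuS)
      then show ?thesis using key[OF X b a] by simp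
    qed
    then show ?thesis by blast
  next
    case False
    then have abv: "\<beta> = 0" "\<alpha> = 1" using ab0 ab1 by simp_all
    have "u X (fp_mult a b) = fp_mult (u X a) (u X b)"
      if X: "finite X" and a: "a \<in> fpolys X" and b: "b \<in> fpolys X" for X a b
    proof -
      have "nu2 x y a b S = fp_mult a b" using abv by (simp add: nuS)
      then show ?thesis using key[OF X a b] by simp
    qed
    then show ?thesis by blast
  qed
qed

end


lemma alg_hom_conj_coeff:
  fixes \<phi> :: "'k::field \<Rightarrow> 'k" and g :: "('x, 'k) fpoly \<Rightarrow> ('x, 'k) fpoly"
  assumes f: "field_aut \<phi>" and h: "alg_hom X Y g"
  shows "alg_hom X Y (restr X (coeff_map (inv \<phi>) \<circ> g \<circ> coeff_map \<phi>))"
proof -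
  have fi: "field_aut (inv \<phi>)" by (rule field_aut_inv[OF f])
  have m: "coeff_map \<phi> p \<in> fpolys X" if "p \<in> fpolys X" for p using that coeff_map_fpolys[OF f, of p X] by blast
  have m': "coeff_map (inv \<phi>) q \<in> fpolys Y" if "q \<in> fpolys Y" for q using that coeff_map_fpolys[OF fi, of q Y] by blast
  show ?thesis
    unfolding alg_hom_def
  proof (intro conjI ballI allI impI)
    fix p :: "('x, 'k) fpoly" assume p: "p \<in> fpolys X"
    show "restr X (coeff_map (inv \<phi>) \<circ> g \<circ> coeff_map \<phi>) p \<in> fpolys Y"
      using p m m' alg_hom_in[OF h] by simp
    fix q :: "('x, 'k) fpoly" assume q: "q \<in> fpolys X"
    show "restr X (coeff_map (inv \<phi>) \<circ> g \<circ> coeff_map \<phi>) (fp_add p q) =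
      fp_add (restr X (coeff_map (inv \<phi>) \<circ> g \<circ> coeff_map \<phi>) p) (restr X (coeff_map (inv \<phi>) \<circ> g \<circ> coeff_map \<phi>) q)"
      using p q m by (simp add: fp_add_eq coeff_map_add[OF f] coeff_map_add[OF fi] alg_hom_add[OF h])
    show "restr X (coeff_map (inv \<phi>) \<circ> g \<circ> coeff_map \<phi>) (fp_mult p q) =
      fp_mult (restr X (coeff_map (inv \<phi>) \<circ> g \<circ> coeff_map \<phi>) p) (restr X (coeff_map (inv \<phi>) \<circ> g \<circ> coeff_map \<phi>) q)"
      using p q m by (simp add: coeff_map_mult[OF f] coeff_map_mult[OF fi] alg_hom_mult[OF h])
  next
    fix c :: 'k and p :: "('x, 'k) fpoly" assume p: "p \<in> fpolys X"
    show "restr X (coeff_map (inv \<phi>) \<circ> g \<circ> coeff_map \<phi>) (fp_smult c p) =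
      fp_smult c (restr X (coeff_map (inv \<phi>) \<circ> g \<circ> coeff_map \<phi>) p)"
      using p m by (simp add: coeff_map_smult[OF f] coeff_map_smult[OF fi] alg_hom_smult[OF h] fa_inv_left[OF f])
  next
    show "restr X (coeff_map (inv \<phi>) \<circ> g \<circ> coeff_map \<phi>) fp_one = fp_one"
      by (simp add: coeff_map_one[OF f] coeff_map_one[OF fi] alg_hom_one[OF h])
  next
    fix p :: "('x, 'k) fpoly" assume "p \<notin> fpolys X"
    then show "restr X (coeff_map (inv \<phi>) \<circ> g \<circ> coeff_map \<phi>) p = undefined" by simp
  qed
qed

locale catC = catB FO FM x0 y0 for FO :: "'x set \<Rightarrow> 'x set" and FM :: "('x, 'k::field) mor \<Rightarrow> ('x, 'k) mor" and x0 y0 +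
  assumes infk: "infinite (UNIV :: 'k set)"
begin

lemma kap_aff:
  assumes p: "p \<in> fpolys {x0}" and p': "p' \<in> fpolys {x0}" and e: "\<And>a. ev p (ev p' a) = a"
  shows "\<exists>\<alpha> \<beta>. \<forall>a. kap (ev p a) = \<alpha> * kap a + \<beta>"
proof -
  have sp: "s {x0} p \<in> fpolys {y0}" and sp': "s {x0} p' \<in> fpolys {y0}"
    using s_mem[OF _ p] s_mem[OF _ p'] FOx0 by auto
  have "ev (s {x0} p) (ev (s {x0} p') t) = t" for t
  proof -
    have "t \<in> range kap" using kap_bij by (simp add: bij_def)
    then obtain a where a: "kap a = t" by auto
    have "ev (s {x0} p) (ev (s {x0} p') t) = ev (s {x0} p) (kap (ev p' a))"
      using s_points[OF p', of a] a by simp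
    also have "\<dots> = kap (ev p (ev p' a))" using s_points[OF p] by simp
    also have "\<dots> = t" using e a by simp
    finally show ?thesis .
  qed
  then obtain \<alpha> \<beta> where "\<forall>t. ev (s {x0} p) t = \<alpha> * t + \<beta>"
    using aff[OF infk sp sp'] by blast
  then have "\<forall>a. kap (ev p a) = \<alpha> * kap a + \<beta>" using s_points[OF p] by simp
  then show ?thesis by blast
qed

lemma kap_semiaffine: "\<exists>\<phi> k1 k0. field_aut \<phi> \<and> k1 \<noteq> 0 \<and> (\<forall>a. kap a = k1 * \<phi> a + k0)"
proof (rule kappa_semiaffine[OF kap_bij])
  fix c :: 'k
  let ?p = "mon [x0] + cst c :: ('x, 'k) fpoly"
  let ?p' = "mon [x0] + cst (- c) :: ('x, 'k) fpoly"
  have ev1: "ev ?p a = a + c" for a by (simp add: ev_add)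
  have ev2: "ev ?p' a = a - c" for a by (simp add: ev_add)
  obtain \<alpha> \<beta> where "\<forall>a. kap (ev ?p a) = \<alpha> * kap a + \<beta>"
    using kap_aff[of ?p ?p'] ev1 ev2 by auto
  then show "\<exists>\<alpha> \<beta>. \<forall>a. kap (a + c) = \<alpha> * kap a + \<beta>" using ev1 by auto
next
  fix l :: 'k assume l: "l \<noteq> 0"
  let ?p = "fp_smult l (mon [x0]) :: ('x, 'k) fpoly"
  let ?p' = "fp_smult (inverse l) (mon [x0]) :: ('x, 'k) fpoly"
  have ev1: "ev ?p a = l * a" for a by (simp add: ev_smult)
  have ev2: "ev ?p' a = inverse l * a" for a by (simp add: ev_smult)
  obtain \<alpha> \<beta> where "\<forall>a. kap (ev ?p a) = \<alpha> * kap a + \<beta>"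
    using kap_aff[of ?p ?p'] ev1 ev2 l by auto
  then show "\<exists>\<gamma> \<delta>. \<forall>a. kap (l * a) = \<gamma> * kap a + \<delta>" using ev1 by auto
qed

end

locale catD = catC FO FM x0 y0 for FO :: "'x set \<Rightarrow> 'x set" and FM :: "('x, 'k::field) mor \<Rightarrow> ('x, 'k) mor" and x0 y0 +
  fixes \<phi> :: "'k \<Rightarrow> 'k" and k1 k0 :: 'k
  assumes fa: "field_aut \<phi>" and k1nz: "k1 \<noteq> 0" and kapf: "kap a = k1 * \<phi> a + k0"
begin

abbreviation "\<psi> \<equiv> inv \<phi>"

lemma fi: "field_aut \<psi>" by (rule field_aut_inv[OF fa])

definition "a1 = \<psi> k1"
definition "a0 = \<psi> k0"
definition "al0 = inverse a1"
definition "be0 = - (a0 * inverse a1)"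

lemma a1nz: "a1 \<noteq> 0"
  unfolding a1_def using k1nz fa_eq0[OF fi] by simp

lemma psi_kap: "\<psi> (kap (al0 * e + be0)) = e"
proof -
  have "\<psi> (kap (al0 * e + be0)) = a1 * (al0 * e + be0) + a0"
    by (simp add: kapf fa_add[OF fi] fa_mult[OF fi] fa_inv_left[OF fa] a1_def a0_def)
  also have "\<dots> = e" using a1nz by (simp add: al0_def be0_def field_simps)
  finally show ?thesis .
qed

definition T :: "('x, 'k) fpoly \<Rightarrow> ('x, 'k) fpoly" where
  "T a = fp_smult al0 a + cst be0"

lemma T_mem: "a \<in> fpolys X \<Longrightarrow> T a \<in> fpolys X"
  by (simp add: T_def)

lemma T_cst: "T (cst c) = cst (al0 * c + be0)"
  by (simp add: T_def smult_cst cst_add)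

lemma T_hom: "alg_hom X Y \<nu> \<Longrightarrow> a \<in> fpolys X \<Longrightarrow> \<nu> (T a) = T (\<nu> a)"
  by (simp add: T_def alg_hom_add alg_hom_smult alg_hom_cst)

lemma al0a1: "al0 * a1 = 1" "a1 * al0 = 1"
  using a1nz by (simp_all add: al0_def)

lemma T_bij: "bij_betw T (fpolys X) (fpolys X)"
proof (rule bij_betw_byWitness[where f'="\<lambda>b. fp_smult a1 (b - cst be0)"])
  have l: "fp_smult a1 (T a - cst be0) = a" for a
  proof -
    have "T a - cst be0 = fp_smult al0 a" by (simp add: T_def)
    then show ?thesis by (simp add: al0a1)
  qed
  show "\<forall>a\<in>fpolys X. fp_smult a1 (T a - cst be0) = a" using l by blast
  have r: "T (fp_smult a1 (b - cst be0)) = b" for b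
  proof -
    have "T (fp_smult a1 (b - cst be0)) = fp_smult (al0 * a1) (b - cst be0) + cst be0"
      by (simp add: T_def)
    also have "\<dots> = b" by (simp add: al0a1)
    finally show ?thesis .
  qed
  show "\<forall>a'\<in>fpolys X. T (fp_smult a1 (a' - cst be0)) = a'" using r by blast
  show "T ` fpolys X \<subseteq> fpolys X" using T_mem by blast
  show "(\<lambda>b. fp_smult a1 (b - cst be0)) ` fpolys X \<subseteq> fpolys X" by auto
qed

lemma ev_T: "finite (fsupp p) \<Longrightarrow> ev (T p) a = al0 * ev p a + be0"
  by (simp add: T_def ev_add ev_smult finite_subset[OF fsupp_smult])

definition uN :: "'x set \<Rightarrow> ('x, 'k) fpoly \<Rightarrow> ('x, 'k) fpoly" where
  "uN X a = coeff_map \<psi> (s X (T a))"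

definition stN :: "'x set \<Rightarrow> 'x set \<Rightarrow> (('x, 'k) fpoly \<Rightarrow> ('x, 'k) fpoly) \<Rightarrow> ('x, 'k) fpoly \<Rightarrow> ('x, 'k) fpoly" where
  "stN X Y \<nu> = restr (FO X) (coeff_map \<psi> \<circ> FMf X Y \<nu> \<circ> coeff_map \<phi>)"

lemma coeff_map_bij: "field_aut f \<Longrightarrow> bij_betw (coeff_map f) (fpolys X) (fpolys X)"
proof -
  assume f: "field_aut f"
  show ?thesis
  proof (rule bij_betw_byWitness[where f'="coeff_map (inv f)"])
    show "\<forall>a\<in>fpolys X. coeff_map (inv f) (coeff_map f a) = a" by (simp add: coeff_map_inv1[OF f])
    show "\<forall>a'\<in>fpolys X. coeff_map f (coeff_map (inv f) a') = a'" by (simp add: coeff_map_inv2[OF f])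
    show "coeff_map f ` fpolys X \<subseteq> fpolys X" using coeff_map_fpolys[OF f] by blast
    show "coeff_map (inv f) ` fpolys X \<subseteq> fpolys X" using coeff_map_fpolys[OF field_aut_inv[OF f]] by blast
  qed
qed

lemma uN_bij: "finite X \<Longrightarrow> bij_betw (uN X) (fpolys X) (fpolys (FO X))"
proof -
  assume X: "finite X"
  have "bij_betw (coeff_map \<psi> \<circ> (s X \<circ> T)) (fpolys X) (fpolys (FO X))"
    by (rule bij_betw_trans[OF bij_betw_trans[OF T_bij s_bij[OF X]] coeff_map_bij[OF fi]])
  moreover have "coeff_map \<psi> \<circ> (s X \<circ> T) = uN X" by (simp add: uN_def fun_eq_iff)
  ultimately show ?thesis by simp
qed

lemma uN_mem: "finite X \<Longrightarrow> a \<in> fpolys X \<Longrightarrow> uN X a \<in> fpolys (FO X)"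
  using uN_bij by (auto simp: bij_betw_def)

lemma s_T: "finite X \<Longrightarrow> a \<in> fpolys X \<Longrightarrow> s X (T a) = coeff_map \<phi> (uN X a)"
  by (simp add: uN_def coeff_map_inv2[OF fa])

lemma uN_nat:
  assumes X: "finite X" and Y: "finite Y" and nu: "alg_hom X Y \<nu>" and a: "a \<in> fpolys X"
  shows "uN Y (\<nu> a) = stN X Y \<nu> (uN X a)"
proof -
  have "uN Y (\<nu> a) = coeff_map \<psi> (s Y (\<nu> (T a)))" by (simp add: uN_def T_hom[OF nu a])
  also have "\<dots> = coeff_map \<psi> (FMf X Y \<nu> (s X (T a)))" by (simp add: s_nat[OF X Y nu T_mem[OF a]])
  also have "\<dots> = stN X Y \<nu> (uN X a)"
    using uN_mem[OF X a] by (simp add: stN_def s_T[OF X a])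
  finally show ?thesis .
qed

lemma uN_cst: "finite X \<Longrightarrow> uN X (cst c) = cst c"
  by (simp add: uN_def T_cst s_cst coeff_map_cst[OF fi] psi_kap)

lemma uN_points:
  assumes p: "p \<in> fpolys {x0}"
  shows "\<exists>a. ev (uN {x0} p) t = ev p a \<and> (\<forall>q\<in>fpolys {x0}. ev (uN {x0} q) t = ev q a)"
proof -
  have "\<phi> t \<in> range kap" using kap_bij by (simp add: bij_def)
  then obtain a where a: "kap a = \<phi> t" by auto
  have "ev (uN {x0} q) t = ev q a" if q: "q \<in> fpolys {x0}" for q
  proof -
    have "ev (uN {x0} q) t = \<psi> (ev (s {x0} (T q)) (\<phi> t))" by (simp add: uN_def ev_coeff_map[OF fa])
    also have "\<dots> = \<psi> (kap (ev (T q) a))" using s_points[OF T_mem[OF q], of a] a by simp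
    also have "\<dots> = ev q a" using ev_T[OF fpolys_finite[OF q]] psi_kap by simp
    finally show ?thesis .
  qed
  then show ?thesis using p by blast
qed

lemma uN_scal: "uN {x0} (fp_smult l (mon [x0])) = fp_smult l (uN {x0} (mon [x0]))"
proof -
  have m: "uN {x0} (mon [x0]) \<in> fpolys {y0}" using uN_mem[of "{x0}" "mon [x0]"] FOx0 by simp
  have m1: "uN {x0} (fp_smult l (mon [x0])) \<in> fpolys {y0}"
    using uN_mem[of "{x0}" "fp_smult l (mon [x0])"] FOx0 by simp
  have m2: "fp_smult l (uN {x0} (mon [x0])) \<in> fpolys {y0}" using m by simp
  have ev_eq: "ev (uN {x0} (fp_smult l (mon [x0]))) t = ev (fp_smult l (uN {x0} (mon [x0]))) t" for t
  proof -
    have mm: "(mon [x0] :: ('x, 'k) fpoly) \<in> fpolys {x0}" by simp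
    obtain a where a: "\<forall>q\<in>fpolys {x0}. ev (uN {x0} q) t = ev q a"
      using uN_points[OF mm, of t] by blast
    have e1: "ev (uN {x0} (fp_smult l (mon [x0]))) t = ev (fp_smult l (mon [x0]) :: ('x, 'k) fpoly) a"
      using a by simp
    have e2: "ev (uN {x0} (mon [x0])) t = ev (mon [x0] :: ('x, 'k) fpoly) a"
      using a by simp
    have e3: "ev (fp_smult l (uN {x0} (mon [x0]))) t = l * ev (uN {x0} (mon [x0])) t"
      by (rule ev_smult[OF fpolys_finite[OF m]])
    have e4: "ev (fp_smult l (mon [x0]) :: ('x, 'k) fpoly) a = l * a"
      by (simp add: ev_smult)
    show ?thesis using e1 e2 e3 e4 by simp
  qed
  show ?thesis by (rule ev_inj[OF infk m1 m2 ev_eq])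
qed

lemma natsys_inst: "natsys FO uN stN x0"
proof
  show "\<And>X. finite X \<Longrightarrow> finite (FO X)" by (rule FO_fin)
  show "\<And>X. finite X \<Longrightarrow> bij_betw (uN X) (fpolys X) (fpolys (FO X))" by (rule uN_bij)
  show "\<And>X Y \<nu>. finite X \<Longrightarrow> finite Y \<Longrightarrow> alg_hom X Y \<nu> \<Longrightarrow> alg_hom (FO X) (FO Y) (stN X Y \<nu>)"
    unfolding stN_def by (rule alg_hom_conj_coeff[OF fa FM_shape(2)])
  show "\<And>X Y \<nu> a. finite X \<Longrightarrow> finite Y \<Longrightarrow> alg_hom X Y \<nu> \<Longrightarrow> a \<in> fpolys X \<Longrightarrow> uN Y (\<nu> a) = stN X Y \<nu> (uN X a)"
    by (rule uN_nat)
  show "\<And>X c. finite X \<Longrightarrow> uN X (cst c) = cst c" by (rule uN_cst)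
  show "\<And>l. uN {x0} (fp_smult l (mon [x0])) = fp_smult l (uN {x0} (mon [x0]))" by (rule uN_scal)
  show "infinite (UNIV :: 'k set)" by (rule infk)
qed

end


lemma mirror_apply: "mirror_map p w = p (rev w)"
  by (simp add: mirror_map_def)

lemma mirror_invol[simp]: "mirror_map (mirror_map p) = p"
  by (simp add: mirror_map_def fun_eq_iff)

lemma fsupp_mirror: "fsupp (mirror_map p) = rev ` fsupp p"
proof
  show "fsupp (mirror_map p) \<subseteq> rev ` fsupp p"
  proof
    fix w assume "w \<in> fsupp (mirror_map p)"
    then have "rev w \<in> fsupp p" by (simp add: fsupp_def mirror_apply)
    then show "w \<in> rev ` fsupp p" by (metis image_eqI rev_rev_ident)
  qed
  show "rev ` fsupp p \<subseteq> fsupp (mirror_map p)"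
    by (auto simp: fsupp_def mirror_apply)
qed

lemma mirror_fpolys: "p \<in> fpolys X \<Longrightarrow> mirror_map p \<in> fpolys X"
  unfolding fpolys_iff fsupp_mirror by auto

lemma mirror_add: "mirror_map (p + q) = mirror_map p + mirror_map q"
  by (simp add: mirror_map_def fun_eq_iff fun_ops)

lemma mirror_smult: "mirror_map (fp_smult c p) = fp_smult c (mirror_map p)"
  by (simp add: mirror_map_def fun_eq_iff fp_smult_def)

lemma mirror_one: "mirror_map fp_one = fp_one"
  by (simp add: mirror_map_def fun_eq_iff fp_one_def)

lemma mirror_coeff: "mirror_map (coeff_map f p) = coeff_map f (mirror_map p)"
  by (simp add: mirror_map_def coeff_map_def fun_eq_iff)

lemma rev_split: "a @ b = rev w \<Longrightarrow> rev b @ rev a = w"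
  by (metis rev_append rev_rev_ident)

lemma mirror_mult: "mirror_map (fp_mult p q) = fp_mult (mirror_map q) (mirror_map p)"
proof
  fix w
  have "mirror_map (fp_mult p q) w = (\<Sum>(u, v)\<in>splits (rev w). p u * q v)"
    by (simp add: mirror_apply fp_mult_splits)
  also have "\<dots> = (\<Sum>(u, v)\<in>splits w. q (rev u) * p (rev v))"
    by (rule sum.reindex_bij_witness[where i="\<lambda>(u, v). (rev v, rev u)" and j="\<lambda>(u, v). (rev v, rev u)"])
       (auto simp: splits_def mult.commute rev_split)
  also have "\<dots> = fp_mult (mirror_map q) (mirror_map p) w"
    by (simp add: fp_mult_splits mirror_apply case_prod_beta)
  finally show "mirror_map (fp_mult p q) w = fp_mult (mirror_map q) (mirror_map p) w" .
qed

section \<open>Conjugation by families of isomorphisms\<close>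

definition conjm :: "('x set \<Rightarrow> 'x set) \<Rightarrow> ('x set \<Rightarrow> ('x, 'k::field) fpoly \<Rightarrow> ('x, 'k) fpoly) \<Rightarrow> ('x, 'k) mor \<Rightarrow> ('x, 'k) mor" where
  "conjm F \<sigma> m = (F (mdom m), F (mcod m),
      restr (F (mdom m)) (\<sigma> (mcod m) \<circ> mfun m \<circ> inv_into (fpolys (mdom m)) (\<sigma> (mdom m))))"

lemma restr_cong: "(\<And>p. p \<in> fpolys X \<Longrightarrow> f p = g p) \<Longrightarrow> restr X f = restr X g"
  by (auto simp: restr_def fun_eq_iff)

lemma alg_hom_inv:
  fixes f :: "('x, 'k::field) fpoly \<Rightarrow> ('x, 'k) fpoly"
  assumes h: "alg_hom X Y f" and b: "bij_betw f (fpolys X) (fpolys Y)"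
  shows "alg_hom Y X (restr Y (inv_into (fpolys X) f))"
proof -
  let ?g = "inv_into (fpolys X) f"
  have gm: "?g q \<in> fpolys X" if "q \<in> fpolys Y" for q using that b bij_betwE bij_betw_inv_into by blast
  have fg: "f (?g q) = q" if "q \<in> fpolys Y" for q using that b by (simp add: bij_betw_inv_into_right)
  have gf: "?g (f p) = p" if "p \<in> fpolys X" for p using that b by (simp add: bij_betw_inv_into_left)
  show ?thesis
    unfolding alg_hom_def
  proof (intro conjI ballI allI impI)
    fix q :: "('x, 'k) fpoly" assume q: "q \<in> fpolys Y"
    show "restr Y ?g q \<in> fpolys X" using q gm by simp
    fix q' :: "('x, 'k) fpoly" assume q': "q' \<in> fpolys Y"
    have "f (?g q + ?g q') = q + q'" using gm q q' fg by (simp add: alg_hom_add[OF h])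
    then have "?g (q + q') = ?g q + ?g q'" using gf gm q q' by (metis fpolys_add)
    then show "restr Y ?g (fp_add q q') = fp_add (restr Y ?g q) (restr Y ?g q')"
      using q q' by (simp add: fp_add_eq)
    have "f (fp_mult (?g q) (?g q')) = fp_mult q q'" using gm q q' fg by (simp add: alg_hom_mult[OF h])
    then have "?g (fp_mult q q') = fp_mult (?g q) (?g q')" using gf gm q q' by (metis fpolys_mult)
    then show "restr Y ?g (fp_mult q q') = fp_mult (restr Y ?g q) (restr Y ?g q')"
      using q q' by simp
  next
    fix c :: 'k and q :: "('x, 'k) fpoly" assume q: "q \<in> fpolys Y"
    have "f (fp_smult c (?g q)) = fp_smult c q" using gm q fg by (simp add: alg_hom_smult[OF h])
    then have "?g (fp_smult c q) = fp_smult c (?g q)" using gf gm q by (metis fpolys_smult)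
    then show "restr Y ?g (fp_smult c q) = fp_smult c (restr Y ?g q)" using q by simp
  next
    have "?g fp_one = fp_one" using gf[of fp_one] alg_hom_one[OF h] by simp
    then show "restr Y ?g fp_one = fp_one" by simp
  next
    fix q :: "('x, 'k) fpoly" assume "q \<notin> fpolys Y"
    then show "restr Y ?g q = undefined" by simp
  qed
qed


lemma conjm_simp: "conjm F \<sigma> (X, Y, f) = (F X, F Y, restr (F X) (\<sigma> Y \<circ> f \<circ> inv_into (fpolys X) (\<sigma> X)))"
  by (simp add: conjm_def mdom_def mcod_def mfun_def)

lemma conj_cat_aut:
  fixes F :: "'x set \<Rightarrow> 'x set" and \<sigma> :: "'x set \<Rightarrow> ('x, 'k::field) fpoly \<Rightarrow> ('x, 'k) fpoly"
  assumes bF: "bij_betw F Obj Obj"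
    and hs: "\<And>X. finite X \<Longrightarrow> alg_hom X (F X) (\<sigma> X)"
    and bs: "\<And>X. finite X \<Longrightarrow> bij_betw (\<sigma> X) (fpolys X) (fpolys (F X))"
  shows "cat_aut F (conjm F \<sigma>)"
proof -
  define iv where "iv X = inv_into (fpolys X) (\<sigma> X)" for X
  have Ffin: "finite X \<Longrightarrow> finite (F X)" for X using bF by (auto simp: bij_betw_def Obj_iff)
  have Finj: "finite X \<Longrightarrow> finite Y \<Longrightarrow> F X = F Y \<Longrightarrow> X = Y" for X Y
    using bF by (auto simp: bij_betw_def inj_on_def Obj_iff)
  have Fsurj: "finite X' \<Longrightarrow> \<exists>X. finite X \<and> F X = X'" for X'
  proof -
    assume "finite X'"
    then have "X' \<in> F ` Obj" using bF by (simp add: bij_betw_def Obj_iff)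
    then show ?thesis by (auto simp: Obj_iff)
  qed
  have ivm: "iv X b \<in> fpolys X" if X: "finite X" and b: "b \<in> fpolys (F X)" for X b
  proof -
    have "bij_betw (iv X) (fpolys (F X)) (fpolys X)" unfolding iv_def by (rule bij_betw_inv_into[OF bs[OF X]])
    then show ?thesis using b by (auto simp: bij_betw_def)
  qed
  have siv: "\<sigma> X (iv X b) = b" if X: "finite X" and b: "b \<in> fpolys (F X)" for X b
    unfolding iv_def by (rule bij_betw_inv_into_right[OF bs[OF X] b])
  have ivs: "iv X (\<sigma> X a) = a" if X: "finite X" and a: "a \<in> fpolys X" for X a
    unfolding iv_def by (rule bij_betw_inv_into_left[OF bs[OF X] a])
  have sm: "finite X \<Longrightarrow> a \<in> fpolys X \<Longrightarrow> \<sigma> X a \<in> fpolys (F X)" for X a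
    by (rule alg_hom_in[OF hs])
  have hiv: "finite X \<Longrightarrow> alg_hom (F X) X (restr (F X) (iv X))" for X
    unfolding iv_def by (rule alg_hom_inv[OF hs bs])
  have cs: "conjm F \<sigma> (X, Y, f) = (F X, F Y, restr (F X) (\<sigma> Y \<circ> f \<circ> iv X))" for X Y f
    by (simp add: conjm_simp iv_def)
  have chom: "alg_hom (F X) (F Y) (restr (F X) (\<sigma> Y \<circ> f \<circ> iv X))"
    if X: "finite X" and Y: "finite Y" and f: "alg_hom X Y f" for X Y f
  proof -
    have "alg_hom (F X) (F Y) (restr (F X) (\<sigma> Y \<circ> restr (F X) (f \<circ> restr (F X) (iv X))))"
      by (rule alg_hom_comp[OF alg_hom_comp[OF hiv[OF X] f] hs[OF Y]])
    moreover have "restr (F X) (\<sigma> Y \<circ> restr (F X) (f \<circ> restr (F X) (iv X))) = restr (F X) (\<sigma> Y \<circ> f \<circ> iv X)"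
      by (rule restr_cong) simp
    ultimately show ?thesis by simp
  qed
  have inMor: "conjm F \<sigma> m \<in> Mor" if "m \<in> Mor" for m :: "('x, 'k) mor"
  proof -
    obtain X Y f where m: "m = (X, Y, f)" by (cases m) auto
    then have X: "finite X" and Y: "finite Y" and f: "alg_hom X Y f" using that by (auto simp: Mor_iff)
    show ?thesis using m chom[OF X Y f] Ffin[OF X] Ffin[OF Y] by (simp add: cs Mor_iff)
  qed
  have inj: "inj_on (conjm F \<sigma>) Mor"
  proof (rule inj_onI)
    fix m1 m2 :: "('x, 'k) mor" assume m1: "m1 \<in> Mor" and m2: "m2 \<in> Mor" and e: "conjm F \<sigma> m1 = conjm F \<sigma> m2"
    obtain X1 Y1 f1 where mm1: "m1 = (X1, Y1, f1)" by (cases m1) auto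
    obtain X2 Y2 f2 where mm2: "m2 = (X2, Y2, f2)" by (cases m2) auto
    have X1: "finite X1" and Y1: "finite Y1" and f1: "alg_hom X1 Y1 f1" using m1 mm1 by (auto simp: Mor_iff)
    have X2: "finite X2" and Y2: "finite Y2" and f2: "alg_hom X2 Y2 f2" using m2 mm2 by (auto simp: Mor_iff)
    have "F X1 = F X2" "F Y1 = F Y2" using e mm1 mm2 by (simp_all add: cs)
    then have XX: "X1 = X2" and YY: "Y1 = Y2" using Finj X1 X2 Y1 Y2 by auto
    have fe: "restr (F X1) (\<sigma> Y1 \<circ> f1 \<circ> iv X1) = restr (F X1) (\<sigma> Y1 \<circ> f2 \<circ> iv X1)"
      using e mm1 mm2 XX YY by (simp add: cs)
    have "f1 = f2"
    proof
      fix p :: "('x, 'k) fpoly" show "f1 p = f2 p"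
      proof (cases "p \<in> fpolys X1")
        case True
        have "restr (F X1) (\<sigma> Y1 \<circ> f1 \<circ> iv X1) (\<sigma> X1 p) = restr (F X1) (\<sigma> Y1 \<circ> f2 \<circ> iv X1) (\<sigma> X1 p)"
          using fe by simp
        then have "\<sigma> Y1 (f1 p) = \<sigma> Y1 (f2 p)" using True sm[OF X1 True] ivs[OF X1 True] by simp
        moreover have "f1 p \<in> fpolys Y1" "f2 p \<in> fpolys Y1"
          using alg_hom_in[OF f1 True] alg_hom_in[OF f2[folded XX YY] True] by auto
        ultimately show ?thesis using bs[OF Y1] by (auto simp: bij_betw_def inj_on_def)
      next
        case False
        then show ?thesis using alg_hom_out[OF f1 False] alg_hom_out[OF f2[folded XX YY] False] by simp
      qed
    qed
    then show "m1 = m2" using mm1 mm2 XX YY by simp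
  qed
  have surj: "conjm F \<sigma> ` Mor = Mor"
  proof
    show "conjm F \<sigma> ` Mor \<subseteq> Mor" using inMor by blast
    show "Mor \<subseteq> conjm F \<sigma> ` Mor"
    proof
      fix m' :: "('x, 'k) mor" assume m': "m' \<in> Mor"
      obtain X' Y' g where mm: "m' = (X', Y', g)" by (cases m') auto
      have X': "finite X'" and Y': "finite Y'" and g: "alg_hom X' Y' g" using m' mm by (auto simp: Mor_iff)
      obtain X where X: "finite X" "F X = X'" using Fsurj[OF X'] by blast
      obtain Y where Y: "finite Y" "F Y = Y'" using Fsurj[OF Y'] by blast
      let ?f = "restr X (iv Y \<circ> g \<circ> \<sigma> X)"
      have hf: "alg_hom X Y ?f"
      proof -
        have "alg_hom X Y (restr X (restr (F Y) (iv Y) \<circ> restr X (g \<circ> \<sigma> X)))"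
          by (rule alg_hom_comp[OF alg_hom_comp[OF hs[OF X(1)] g[folded X(2) Y(2)]] hiv[OF Y(1)]])
        moreover have "restr X (restr (F Y) (iv Y) \<circ> restr X (g \<circ> \<sigma> X)) = ?f"
          by (rule restr_cong) (use alg_hom_in[OF g[folded X(2) Y(2)]] sm[OF X(1)] in simp)
        ultimately show ?thesis by simp
      qed
      have "restr (F X) (\<sigma> Y \<circ> ?f \<circ> iv X) = g"
      proof
        fix b :: "('x, 'k) fpoly" show "restr (F X) (\<sigma> Y \<circ> ?f \<circ> iv X) b = g b"
        proof (cases "b \<in> fpolys (F X)")
          case True
          have "g b \<in> fpolys (F Y)" using alg_hom_in[OF g] True X(2) Y(2) by simp
          then show ?thesis using True ivm[OF X(1) True] siv[OF X(1) True] siv[OF Y(1)] by simp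
        next
          case False
          then show ?thesis using alg_hom_out[OF g] X(2) by simp
        qed
      qed
      then have "conjm F \<sigma> (X, Y, ?f) = m'" using mm X Y by (simp add: cs)
      moreover have "(X, Y, ?f) \<in> Mor" using X Y hf by (simp add: Mor_iff)
      ultimately show "m' \<in> conjm F \<sigma> ` Mor" by blast
    qed
  qed
  have comp: "conjm F \<sigma> (mcomp g f) = mcomp (conjm F \<sigma> g) (conjm F \<sigma> f)"
    if f: "f \<in> Mor" and g: "g \<in> Mor" and fg: "mcod f = mdom g" for f g :: "('x, 'k) mor"
  proof -
    obtain X Y f1 where ff: "f = (X, Y, f1)" by (cases f) auto
    obtain Y' Z g1 where gg: "g = (Y', Z, g1)" by (cases g) auto
    have YY: "Y' = Y" using fg ff gg by (simp add: mdom_def mcod_def)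
    have X: "finite X" and Y: "finite Y" and Z: "finite Z" and f1: "alg_hom X Y f1" and g1: "alg_hom Y Z g1"
      using f g ff gg YY by (auto simp: Mor_iff)
    have "restr (F X) (\<sigma> Z \<circ> restr X (g1 \<circ> f1) \<circ> iv X)
        = restr (F X) (restr (F Y) (\<sigma> Z \<circ> g1 \<circ> iv Y) \<circ> restr (F X) (\<sigma> Y \<circ> f1 \<circ> iv X))"
    proof (rule restr_cong)
      fix b :: "('x, 'k) fpoly" assume b: "b \<in> fpolys (F X)"
      have a: "iv X b \<in> fpolys X" by (rule ivm[OF X b])
      have fa: "f1 (iv X b) \<in> fpolys Y" by (rule alg_hom_in[OF f1 a])
      show "(\<sigma> Z \<circ> restr X (g1 \<circ> f1) \<circ> iv X) b = (restr (F Y) (\<sigma> Z \<circ> g1 \<circ> iv Y) \<circ> restr (F X) (\<sigma> Y \<circ> f1 \<circ> iv X)) b"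
        using a fa b sm[OF Y fa] ivs[OF Y fa] by simp
    qed
    then show ?thesis using ff gg YY by (simp add: mcomp_simp cs)
  qed
  have ident: "conjm F \<sigma> (mid X) = mid (F X)" if "X \<in> Obj" for X :: "'x set"
  proof -
    have X: "finite X" using that by (simp add: Obj_iff)
    have "restr (F X) (\<sigma> X \<circ> restr X id \<circ> iv X) = restr (F X) id"
      by (rule restr_cong) (simp add: ivm[OF X] siv[OF X])
    then show ?thesis by (simp add: mid_def cs)
  qed
  show ?thesis
    unfolding cat_aut_def
  proof (intro conjI ballI impI)
    show "bij_betw F Obj Obj" by (rule bF)
    show "bij_betw (conjm F \<sigma>) Mor Mor" using inj surj by (simp add: bij_betw_def)
  next
    fix m :: "('x, 'k) mor" assume "m \<in> Mor"
    show "mdom (conjm F \<sigma> m) = F (mdom m)" by (simp add: conjm_def mdom_def)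
    show "mcod (conjm F \<sigma> m) = F (mcod m)" by (simp add: conjm_def mcod_def mdom_def)
  next
    fix f g :: "('x, 'k) mor" assume "f \<in> Mor" "g \<in> Mor" "mcod f = mdom g"
    then show "conjm F \<sigma> (mcomp g f) = mcomp (conjm F \<sigma> g) (conjm F \<sigma> f)" by (rule comp)
  next
    fix X :: "'x set" assume "X \<in> Obj"
    then show "conjm F \<sigma> (mid X) = mid (F X)" by (rule ident)
  qed
qed


lemma three_distinct:
  assumes "infinite (UNIV :: 'x set)"
  shows "\<exists>x y z :: 'x. x \<noteq> y \<and> x \<noteq> z \<and> y \<noteq> z"
proof -
  obtain x y :: 'x where xy: "x \<noteq> y" using two_distinct[OF assms] by blast
  have "UNIV \<noteq> {x, y}"
  proof
    assume "UNIV = {x, y}"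
    then have "finite (UNIV :: 'x set)" by (metis finite.emptyI finite_insert)
    with assms show False by simp
  qed
  then obtain z where "z \<notin> {x, y}" by auto
  then show ?thesis using xy by blast
qed

lemma inv_into_invol:
  assumes inv: "\<And>p. \<eta> (\<eta> p) = p" and mem: "\<And>p. p \<in> A \<Longrightarrow> \<eta> p \<in> A" and b: "b \<in> A"
  shows "inv_into A \<eta> b = \<eta> b"
proof (rule inv_into_f_eq)
  show "inj_on \<eta> A" by (rule inj_onI) (metis inv)
  show "\<eta> b \<in> A" by (rule mem[OF b])
  show "\<eta> (\<eta> b) = b" by (rule inv)
qed

context catD
begin

lemma uN_surj:
  assumes X: "finite X" and c: "c \<in> fpolys (FO X)"
  shows "\<exists>a\<in>fpolys X. uN X a = c"
proof -
  have "c \<in> uN X ` fpolys X" using uN_bij[OF X] c by (simp add: bij_betw_def)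
  then show ?thesis by blast
qed

lemma uN_inj: "finite X \<Longrightarrow> a \<in> fpolys X \<Longrightarrow> b \<in> fpolys X \<Longrightarrow> uN X a = uN X b \<Longrightarrow> a = b"
  using uN_bij by (auto simp: bij_betw_def inj_on_def)

lemma assemble:
  fixes \<eta> :: "('x, 'k) fpoly \<Rightarrow> ('x, 'k) fpoly"
  assumes \<eta>_inv: "\<And>p. \<eta> (\<eta> p) = p"
    and \<eta>_mem: "\<And>X p. p \<in> fpolys X \<Longrightarrow> \<eta> p \<in> fpolys X"
    and \<eta>_coeff: "\<And>f p. \<eta> (coeff_map f p) = coeff_map f (\<eta> p)"
    and \<sigma>hom: "\<And>X. finite X \<Longrightarrow> alg_hom X (FO X) (restr X (\<eta> \<circ> uN X))"
  defines "\<sigma> \<equiv> (\<lambda>X. restr X (\<eta> \<circ> uN X))"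
  shows "cat_aut FO (conjm FO \<sigma>)" and "inner_aut FO (conjm FO \<sigma>)"
    and "\<And>m. m \<in> Mor \<Longrightarrow> FM m = (mdom (std_aut \<phi> (conjm FO \<sigma> m)), mcod (std_aut \<phi> (conjm FO \<sigma> m)),
           restr (mdom (std_aut \<phi> (conjm FO \<sigma> m))) (\<eta> \<circ> mfun (std_aut \<phi> (conjm FO \<sigma> m)) \<circ> inv_into (fpolys (mdom (std_aut \<phi> (conjm FO \<sigma> m)))) \<eta>))"
proof -
  have \<eta>bij: "bij_betw \<eta> (fpolys A) (fpolys A)" for A
    by (rule bij_betw_byWitness[where f'=\<eta>]) (auto simp: \<eta>_inv \<eta>_mem)
  have sbij: "bij_betw (\<sigma> X) (fpolys X) (fpolys (FO X))" if X: "finite X" for X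
  proof -
    have "bij_betw (\<eta> \<circ> uN X) (fpolys X) (fpolys (FO X))"
      by (rule bij_betw_trans[OF uN_bij[OF X] \<eta>bij])
    moreover have "bij_betw (\<sigma> X) (fpolys X) (fpolys (FO X)) = bij_betw (\<eta> \<circ> uN X) (fpolys X) (fpolys (FO X))"
      by (rule bij_betw_cong) (simp add: \<sigma>_def)
    ultimately show ?thesis by simp
  qed
  have shom: "alg_hom X (FO X) (\<sigma> X)" if "finite X" for X unfolding \<sigma>_def by (rule \<sigma>hom[OF that])
  show ca: "cat_aut FO (conjm FO \<sigma>)"
    by (rule conj_cat_aut[OF FO_bij shom sbij])
  show "inner_aut FO (conjm FO \<sigma>)"
    unfolding inner_aut_def
  proof (intro exI[of _ \<sigma>] conjI ballI)
    fix X :: "'x set" assume "X \<in> Obj"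
    then have X: "finite X" by (simp add: Obj_iff)
    show "alg_hom X (FO X) (\<sigma> X)" by (rule shom[OF X])
    show "bij_betw (\<sigma> X) (fpolys X) (fpolys (FO X))" by (rule sbij[OF X])
  next
    fix m :: "('x, 'k) mor" assume "m \<in> Mor"
    show "conjm FO \<sigma> m = (FO (mdom m), FO (mcod m), restr (FO (mdom m)) (\<sigma> (mcod m) \<circ> mfun m \<circ> inv_into (fpolys (mdom m)) (\<sigma> (mdom m))))"
      by (simp add: conjm_def)
  qed
  fix m :: "('x, 'k) mor" assume mM: "m \<in> Mor"
  obtain X Y \<nu> where mm: "m = (X, Y, \<nu>)" by (cases m) auto
  have X: "finite X" and Y: "finite Y" and nu: "alg_hom X Y \<nu>" using mM mm by (auto simp: Mor_iff)
  define iv where "iv = inv_into (fpolys X) (\<sigma> X)"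
  define h where "h = restr (FO X) (coeff_map \<phi> \<circ> restr (FO X) (\<sigma> Y \<circ> \<nu> \<circ> iv) \<circ> coeff_map \<psi>)"
  have sc: "std_aut \<phi> (conjm FO \<sigma> m) = (FO X, FO Y, h)"
    by (simp add: mm conjm_simp std_aut_def h_def iv_def mdom_def mcod_def mfun_def)
  have fe: "FMf X Y \<nu> = restr (FO X) (\<eta> \<circ> h \<circ> inv_into (fpolys (FO X)) \<eta>)"
  proof
    fix b :: "('x, 'k) fpoly"
    show "FMf X Y \<nu> b = restr (FO X) (\<eta> \<circ> h \<circ> inv_into (fpolys (FO X)) \<eta>) b"
    proof (cases "b \<in> fpolys (FO X)")
      case False
      then show ?thesis using alg_hom_out[OF FM_shape(2)[OF X Y nu] False] by simp
    next
      case True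
      have c: "coeff_map \<psi> b \<in> fpolys (FO X)" using True coeff_map_fpolys[OF fi, of b "FO X"] by blast
      obtain a where a: "a \<in> fpolys X" "uN X a = coeff_map \<psi> b" using uN_surj[OF X c] by blast
      have b_eq: "b = coeff_map \<phi> (uN X a)" using a(2) by (simp add: coeff_map_inv2[OF fa])
      have ib: "inv_into (fpolys (FO X)) \<eta> b = \<eta> b"
        by (rule inv_into_invol[OF \<eta>_inv \<eta>_mem True])
      have eb: "\<eta> b \<in> fpolys (FO X)" by (rule \<eta>_mem[OF True])
      have ceb: "coeff_map \<psi> (\<eta> b) = \<sigma> X a"
        using a by (simp add: \<eta>_coeff[symmetric] \<sigma>_def)
      have ceb_mem: "coeff_map \<psi> (\<eta> b) \<in> fpolys (FO X)" using eb coeff_map_fpolys[OF fi, of "\<eta> b" "FO X"] by blast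
      have iva: "iv (\<sigma> X a) = a" unfolding iv_def by (rule bij_betw_inv_into_left[OF sbij[OF X] a(1)])
      have na: "\<nu> a \<in> fpolys Y" by (rule alg_hom_in[OF nu a(1)])
      have "h (\<eta> b) = coeff_map \<phi> (\<sigma> Y (\<nu> a))"
        using eb ceb_mem by (simp add: h_def ceb iva)
      also have "\<dots> = \<eta> (coeff_map \<phi> (uN Y (\<nu> a)))" using na by (simp add: \<sigma>_def \<eta>_coeff)
      also have "\<dots> = \<eta> (s Y (T (\<nu> a)))" by (simp add: s_T[OF Y na])
      also have "\<dots> = \<eta> (FMf X Y \<nu> b)"
        by (simp add: T_hom[OF nu a(1), symmetric] s_nat[OF X Y nu T_mem[OF a(1)]] s_T[OF X a(1)] b_eq)
      finally have "h (\<eta> b) = \<eta> (FMf X Y \<nu> b)" .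
      then show ?thesis using True ib by (simp add: \<eta>_inv)
    qed
  qed
  show "FM m = (mdom (std_aut \<phi> (conjm FO \<sigma> m)), mcod (std_aut \<phi> (conjm FO \<sigma> m)),
           restr (mdom (std_aut \<phi> (conjm FO \<sigma> m))) (\<eta> \<circ> mfun (std_aut \<phi> (conjm FO \<sigma> m)) \<circ> inv_into (fpolys (mdom (std_aut \<phi> (conjm FO \<sigma> m)))) \<eta>))"
    unfolding sc using FM_shape(1)[OF X Y nu] fe mm by (simp add: mdom_def mcod_def mfun_def)
qed

end


context catD
begin

lemma sig_hom:
  fixes \<eta> :: "('x, 'k) fpoly \<Rightarrow> ('x, 'k) fpoly"
  assumes \<eta>_add: "\<And>p q. \<eta> (p + q) = \<eta> p + \<eta> q"
    and \<eta>_smult: "\<And>c p. \<eta> (fp_smult c p) = fp_smult c (\<eta> p)"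
    and \<eta>_one: "\<eta> fp_one = fp_one"
    and \<eta>_mem: "\<And>X p. p \<in> fpolys X \<Longrightarrow> \<eta> p \<in> fpolys X"
    and uadd: "\<And>X a b. finite X \<Longrightarrow> a \<in> fpolys X \<Longrightarrow> b \<in> fpolys X \<Longrightarrow> uN X (a + b) = uN X a + uN X b"
    and usm: "\<And>X a c. finite X \<Longrightarrow> a \<in> fpolys X \<Longrightarrow> uN X (fp_smult c a) = fp_smult c (uN X a)"
    and umul: "\<And>X a b. finite X \<Longrightarrow> a \<in> fpolys X \<Longrightarrow> b \<in> fpolys X \<Longrightarrow>
                 \<eta> (uN X (fp_mult a b)) = fp_mult (\<eta> (uN X a)) (\<eta> (uN X b))"
    and X: "finite X"
  shows "alg_hom X (FO X) (restr X (\<eta> \<circ> uN X))"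
  unfolding alg_hom_def
proof (intro conjI ballI allI impI)
  fix p :: "('x, 'k) fpoly" assume p: "p \<in> fpolys X"
  show "restr X (\<eta> \<circ> uN X) p \<in> fpolys (FO X)" using p uN_mem[OF X p] \<eta>_mem by simp
  fix q :: "('x, 'k) fpoly" assume q: "q \<in> fpolys X"
  show "restr X (\<eta> \<circ> uN X) (fp_add p q) = fp_add (restr X (\<eta> \<circ> uN X) p) (restr X (\<eta> \<circ> uN X) q)"
    using p q by (simp add: fp_add_eq uadd[OF X] \<eta>_add)
  show "restr X (\<eta> \<circ> uN X) (fp_mult p q) = fp_mult (restr X (\<eta> \<circ> uN X) p) (restr X (\<eta> \<circ> uN X) q)"
    using p q by (simp add: umul[OF X])
next
  fix c :: 'k and p :: "('x, 'k) fpoly" assume p: "p \<in> fpolys X"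
  show "restr X (\<eta> \<circ> uN X) (fp_smult c p) = fp_smult c (restr X (\<eta> \<circ> uN X) p)"
    using p by (simp add: usm[OF X] \<eta>_smult)
next
  have "uN X fp_one = fp_one" using uN_cst[OF X, of 1] by (simp add: cst_one)
  then show "restr X (\<eta> \<circ> uN X) fp_one = fp_one" by (simp add: \<eta>_one)
next
  fix p :: "('x, 'k) fpoly" assume "p \<notin> fpolys X"
  then show "restr X (\<eta> \<circ> uN X) p = undefined" by simp
qed

lemma catD_final:
  assumes infx: "infinite (UNIV :: 'x set)"
  shows "\<exists>PO PM \<phi>' (UM :: ('x, 'k) mor \<Rightarrow> ('x, 'k) mor).
           cat_aut PO PM \<and> inner_aut PO PM \<and> field_aut \<phi>' \<and>
           (UM = mirror_aut \<or> UM = id) \<and>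
           (\<forall>X\<in>Obj. FO X = PO X) \<and>
           (\<forall>m\<in>Mor. FM m = UM (std_aut \<phi>' (PM m)))"
proof -
  interpret N: natsys FO uN stN x0 by (rule natsys_inst)
  obtain x y z :: 'x where xyz: "x \<noteq> y" "x \<noteq> z" "y \<noteq> z" using three_distinct[OF infx] by blast
  have uadd: "\<And>X a b. finite X \<Longrightarrow> a \<in> fpolys X \<Longrightarrow> b \<in> fpolys X \<Longrightarrow> uN X (a + b) = uN X a + uN X b"
    by (rule N.add_law[OF xyz(1)])
  have usm: "\<And>X a c. finite X \<Longrightarrow> a \<in> fpolys X \<Longrightarrow> uN X (fp_smult c a) = fp_smult c (uN X a)"
    by (rule N.u_smult)
  from N.mult_law[OF xyz] show ?thesis
  proof
    assume mul: "\<forall>X a b. finite X \<longrightarrow> a \<in> fpolys X \<longrightarrow> b \<in> fpolys X \<longrightarrow> uN X (fp_mult a b) = fp_mult (uN X a) (uN X b)"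
    let ?\<eta> = "id :: ('x, 'k) fpoly \<Rightarrow> ('x, 'k) fpoly"
    have sh: "alg_hom X (FO X) (restr X (?\<eta> \<circ> uN X))" if "finite X" for X
      by (rule sig_hom[OF _ _ _ _ uadd usm _ that]) (use mul in auto)
    note A = assemble[of ?\<eta>, OF _ _ _ sh]
    have ca: "cat_aut FO (conjm FO (\<lambda>X. restr X (?\<eta> \<circ> uN X)))" by (rule A(1)) auto
    have ia: "inner_aut FO (conjm FO (\<lambda>X. restr X (?\<eta> \<circ> uN X)))" by (rule A(2)) auto
    have eq: "FM m = id (std_aut \<phi> (conjm FO (\<lambda>X. restr X (?\<eta> \<circ> uN X)) m))" if m: "m \<in> Mor" for m
    proof -
      let ?m' = "std_aut \<phi> (conjm FO (\<lambda>X. restr X (?\<eta> \<circ> uN X)) m)"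
      have e: "FM m = (mdom ?m', mcod ?m', restr (mdom ?m') (?\<eta> \<circ> mfun ?m' \<circ> inv_into (fpolys (mdom ?m')) ?\<eta>))"
        by (rule A(3)) (auto simp: m)
      have "restr (mdom ?m') (?\<eta> \<circ> mfun ?m' \<circ> inv_into (fpolys (mdom ?m')) ?\<eta>) = mfun ?m'"
      proof -
        have "restr (mdom ?m') (?\<eta> \<circ> mfun ?m' \<circ> inv_into (fpolys (mdom ?m')) ?\<eta>) = restr (mdom ?m') (mfun ?m')"
          by (rule restr_cong) (simp add: inv_into_invol[of id])
        also have "\<dots> = mfun ?m'"
          by (simp add: std_aut_def mfun_def mdom_def restr_def fun_eq_iff)
        finally show ?thesis .
      qed
      then show ?thesis using e by (simp add: mdom_def mcod_def mfun_def)
    qed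
    show ?thesis
      by (rule exI[of _ FO], rule exI[of _ "conjm FO (\<lambda>X. restr X (?\<eta> \<circ> uN X))"], rule exI[of _ \<phi>], rule exI[of _ id])
         (use ca ia fa eq in auto)
  next
    assume mul: "\<forall>X a b. finite X \<longrightarrow> a \<in> fpolys X \<longrightarrow> b \<in> fpolys X \<longrightarrow> uN X (fp_mult a b) = fp_mult (uN X b) (uN X a)"
    let ?\<eta> = "mirror_map :: ('x, 'k) fpoly \<Rightarrow> ('x, 'k) fpoly"
    have sh: "alg_hom X (FO X) (restr X (?\<eta> \<circ> uN X))" if "finite X" for X
      by (rule sig_hom[OF mirror_add mirror_smult mirror_one mirror_fpolys uadd usm _ that])
         (use mul in \<open>auto simp: mirror_mult\<close>)
    note A = assemble[of ?\<eta>, OF _ _ _ sh]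
    have ca: "cat_aut FO (conjm FO (\<lambda>X. restr X (?\<eta> \<circ> uN X)))" by (rule A(1)) (auto simp: mirror_fpolys mirror_coeff)
    have ia: "inner_aut FO (conjm FO (\<lambda>X. restr X (?\<eta> \<circ> uN X)))" by (rule A(2)) (auto simp: mirror_fpolys mirror_coeff)
    have eq: "FM m = mirror_aut (std_aut \<phi> (conjm FO (\<lambda>X. restr X (?\<eta> \<circ> uN X)) m))" if m: "m \<in> Mor" for m
      unfolding mirror_aut_def by (rule A(3)) (auto simp: m mirror_fpolys mirror_coeff)
    show ?thesis
      by (rule exI[of _ FO], rule exI[of _ "conjm FO (\<lambda>X. restr X (?\<eta> \<circ> uN X))"], rule exI[of _ \<phi>], rule exI[of _ mirror_aut])
         (use ca ia fa eq in auto)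
  qed
qed

end

theorem mainTheorem11:
  fixes FO :: "'x set \<Rightarrow> 'x set"
    and FM :: "('x, 'k::field) mor \<Rightarrow> ('x, 'k) mor"
  assumes "infinite (UNIV :: 'k set)"
    and "infinite (UNIV :: 'x set)"
    and "cat_aut FO FM"
  shows "\<exists>PO PM \<phi> (UM :: ('x, 'k) mor \<Rightarrow> ('x, 'k) mor).
           cat_aut PO PM \<and> inner_aut PO PM \<and> field_aut \<phi> \<and>
           (UM = mirror_aut \<or> UM = id) \<and>
           (\<forall>X\<in>Obj. FO X = PO X) \<and>
           (\<forall>m\<in>Mor. FM m = UM (std_aut \<phi> (PM m)))"
proof -
  interpret catA FO FM by unfold_locales (rule assms(3))
  obtain x0 :: 'x where True by simp
  obtain y0 where y0: "FO {x0} = {y0}" using FO_single[OF assms(2)] by blast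
  interpret catC FO FM x0 y0 by unfold_locales (simp_all add: y0 assms(1))
  obtain \<phi> k1 k0 where f: "field_aut \<phi>" "k1 \<noteq> 0" "\<forall>a. kap a = k1 * \<phi> a + k0"
    using kap_semiaffine by blast
  interpret catD FO FM x0 y0 \<phi> k1 k0 by unfold_locales (simp_all add: f)
  show ?thesis by (rule catD_final[OF assms(2)])
qed

end
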